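(* Let $d=2$ and suppose the channel is a scalar Rayleigh fading channel with zero-forcing equalization: given $W^{(l_0)}=(\mathbf I_2,\mathbf 0)$, the deployed channel weights are $W'^{(l_0)}=(\mathbf I_2,B')$ where $B'\in\mathbb R^2$ is the real representation $(\mathrm{Re},\mathrm{Im})$ of $N_0/(\sqrt P H_0)$, with $H_0\sim\mathcal{CN}(0,1)$ and $N_0\sim\mathcal{CN}(0,\sigma_0^2)$ independent, $P>0$, $\gamma=P/\sigma_0^2$. Take the channel-layer metric $d^{(l_0)}((M',B'),(M,B))=\|M'-M\|_{op}+\|B'-B\|_2$. Assume that for every $w\in\mathcal W$ the loss $\ell(w,Z)$, $Z\sim P_Z$, is $\sigma$-sub-Gaussian and that for every $z$, $w\mapsto\ell(w,z)$ is $K$-Lipschitz with respect to $d_{\mathcal W}$. Then the channel penalty equals $\Omega=\mathbb E[d^{(l_0)}(W'^{(l_0)},(\mathbf I_2,\mathbf 0))]=\frac{\pi}{2\sqrt\gamma}$, and for every data-independent distribution $Q_{\tilde W}$ on $\tilde{\mathcal W}$, every $k>0$ and every $\epsilon\in(0,1)$, with probability at least $1-\epsilon$ over $S\sim P_Z^n$, $$\Delta\le\frac{k\sigma^2}{2n}+\frac{D(P_{\tilde W|S}\|Q_{\tilde W})-\log\epsilon}{k}+\frac{\pi K}{2\sqrt\gamma}.$$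
   Context: Setting. Let $\mathcal Z=\mathcal X\times\mathcal Y$ be an instance space with data distribution $P_Z$, and let $S=(Z_1,\dots,Z_n)\sim P_Z^{n}$ be a training set of $n$ i.i.d. samples. An augmented network has $L+1$ layers with weights $W=(W^{(1)},\dots,W^{(L+1)})\in\mathcal W=\mathcal W^{(1)}\times\cdots\times\mathcal W^{(L+1)}$. A distinguished index $l_0$ is the channel layer: $\mathcal W^{(l_0)}=\mathbb R^{d\times d}\times\mathbb R^{d}$, with weights $W^{(l_0)}=(M^{(l_0)},B^{(l_0)})$ acting on a feature $f\in\mathbb R^d$ by $f\mapsto M^{(l_0)}f+B^{(l_0)}$. The other weights $\tilde W=(W^{(l)})_{l\ne l_0}\in\tilde{\mathcal W}=\prod_{l\neq l_0}\mathcal W^{(l)}$ are the learnable weights. A learning algorithm is a Markov kernel $P_{\tilde W|S}$ from $\mathcal Z^n$ to $\tilde{\mathcal W}$; the channel-free training distribution on $\mathcal W$ is $P_{W|S}=P_{\tilde W|S}\otimes\delta_{(\mathbf I_d,\mathbf 0)}$ (channel layer fixed to identity matrix and zero bias). A channel is a Markov kernel $P_{W'^{(l_0)}|W^{(l_0)}}$ on $\mathcal W^{(l_0)}$; the deployment kernel $P_{W'|W}$ sets $W'^{(l)}=W^{(l)}$ for all $l\ne l_0$ and draws $W'^{(l_0)}\sim P_{W'^{(l_0)}|W^{(l_0)}}(\cdot\,|\,W^{(l_0)})$ independently of everything else. The joint distribution on $\mathcal W\times\mathcal W$ is $P_{W'W|S}(W',W|S)=P_{W'|W}(W'|W)P_{W|S}(W|S)$,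 and $P_{W'|S}$ denotes its marginal in $W'$. For a loss $\ell:\mathcal W\times\mathcal Z\to[0,\infty)$ let $L(w)=\mathbb E_{Z\sim P_Z}[\ell(w,Z)]$ and $\hat L(w,S)=\frac1n\sum_{i=1}^n\ell(w,Z_i)$; for a distribution $P$ on $\mathcal W$, $L(P)=\int L(w)P(dw)$ and $\hat L_S(P)=\int\hat L(w,S)P(dw)$. The wireless generalization error is $\Delta=L(P_{W'|S})-\hat L_S(P_{W|S})$. The metric on $\mathcal W$ is $d_{\mathcal W}(W',W)=\sum_{l=1}^{L+1}d^{(l)}(W'^{(l)},W^{(l)})$ where each $d^{(l)}$ is a metric on $\mathcal W^{(l)}$. "$\sigma$-sub-Gaussian" means $\log\mathbb E[e^{\lambda(\ell(w,Z)-L(w))}]\le\lambda^2\sigma^2/2$ for all $\lambda\in\mathbb R$; "$K$-Lipschitz" means $|\ell(w,z)-\ell(w',z)|\le K\,d_{\mathcal W}(w,w')$. "Data-independent" means not depending on $S$. $D(\cdot\|\cdot)$ is the Kullback–Leibler divergence (natural logarithm). $\|\cdot\|_{op}$ is the operator (spectral) norm. $\mathcal{CN}(0,s^2)$ denotes the circularly symmetric complex Gaussian with $\mathbb E|X|^2=s^2$. *)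

theory Defs
  imports "HOL-Probability.Probability"
begin

text \<open>Note that the library constant
  KL_divergence b M N is the divergence of N relative to M.\<close>

definition kl_div :: "'a measure \<Rightarrow> 'a measure \<Rightarrow> ereal" where
  "kl_div P Q =
     (if absolutely_continuous Q P \<and> integrable P (entropy_density (exp 1) Q P)
      then ereal (KL_divergence (exp 1) Q P) else \<infinity>)"

text \<open>Real and imaginary parts independent N(0, s^2/2), so that E|X|^2 = s^2.\<close>

definition cgauss :: "real \<Rightarrow> complex measure" where
  "cgauss s = distr
     (density lborel (normal_density 0 (s / sqrt 2)) \<Otimes>\<^sub>M density lborel (normal_density 0 (s / sqrt 2)))
     borel (\<lambda>(x, y). Complex x y)"

definition re_im :: "complex \<Rightarrow> real ^ 2" where
  "re_im z = (\<chi> i. if i = 1 then Re z else Im z)"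

type_synonym chw = "(real ^ 2 ^ 2) \<times> (real ^ 2)"

definition d_ch :: "chw \<Rightarrow> chw \<Rightarrow> real" where
  "d_ch w' w = onorm (\<lambda>x. (fst w' - fst w) *v x) + norm (snd w' - snd w)"

definition d_W :: "('t \<Rightarrow> 't \<Rightarrow> real) \<Rightarrow> ('t \<times> chw) \<Rightarrow> ('t \<times> chw) \<Rightarrow> real" where
  "d_W dt w' w = dt (fst w') (fst w) + d_ch (snd w') (snd w)"

definition is_metric_on :: "'t set \<Rightarrow> ('t \<Rightarrow> 't \<Rightarrow> real) \<Rightarrow> bool" where
  "is_metric_on A dt \<longleftrightarrow>
     (\<forall>x\<in>A. \<forall>y\<in>A. dt x y \<ge> 0 \<and> (dt x y = 0 \<longleftrightarrow> x = y) \<and> dt x y = dt y x) \<and>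
     (\<forall>x\<in>A. \<forall>y\<in>A. \<forall>z\<in>A. dt x z \<le> dt x y + dt y z)"

definition pop_risk :: "'z measure \<Rightarrow> ('w \<Rightarrow> 'z \<Rightarrow> real) \<Rightarrow> 'w \<Rightarrow> real" where
  "pop_risk PZ loss w = (\<integral>z. loss w z \<partial>PZ)"

definition emp_risk :: "nat \<Rightarrow> ('w \<Rightarrow> 'z \<Rightarrow> real) \<Rightarrow> 'w \<Rightarrow> (nat \<Rightarrow> 'z) \<Rightarrow> real" where
  "emp_risk n loss w S = (1 / real n) * (\<Sum>i<n. loss w (S i))"

definition sub_gaussian :: "'z measure \<Rightarrow> ('z \<Rightarrow> real) \<Rightarrow> real \<Rightarrow> bool" where
  "sub_gaussian PZ X \<sigma> \<longleftrightarrow> integrable PZ X \<and>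
     (\<forall>t::real. integrable PZ (\<lambda>z. exp (t * (X z - (\<integral>z'. X z' \<partial>PZ)))) \<and>
        ln (\<integral>z. exp (t * (X z - (\<integral>z'. X z' \<partial>PZ))) \<partial>PZ) \<le> t\<^sup>2 * \<sigma>\<^sup>2 / 2)"

definition train_dist :: "'t measure \<Rightarrow> 't measure \<Rightarrow> ('t \<times> chw) measure" where
  "train_dist MT PT = PT \<Otimes>\<^sub>M return borel (mat 1, 0)"

definition deploy_dist :: "'t measure \<Rightarrow> (chw \<Rightarrow> chw measure) \<Rightarrow> ('t \<times> chw) measure \<Rightarrow> ('t \<times> chw) measure" where
  "deploy_dist MT chan PW = PW \<bind> (\<lambda>w. return MT (fst w) \<Otimes>\<^sub>M chan (snd w))"

end

theory Submission
  imports Defs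
begin

lemma nn_integral_abs_sym:
  fixes G :: "real \<Rightarrow> ennreal"
  assumes [measurable]: "G \<in> borel_measurable borel"
  shows "(\<integral>\<^sup>+x. G \<bar>x\<bar> \<partial>lborel) = 2 * (\<integral>\<^sup>+x. G x * indicator {0<..} x \<partial>lborel)"
proof -
  have "(\<integral>\<^sup>+x. G \<bar>x\<bar> \<partial>lborel) = (\<integral>\<^sup>+x. G \<bar>x\<bar> * indicator {0<..} x + G \<bar>x\<bar> * indicator {..<0} x \<partial>lborel)"
    by (intro nn_integral_cong_AE AE_I[where N="{0}"]) (auto split: split_indicator)
  also have "\<dots> = (\<integral>\<^sup>+x. G \<bar>x\<bar> * indicator {0<..} x \<partial>lborel) + (\<integral>\<^sup>+x. G \<bar>x\<bar> * indicator {..<0} x \<partial>lborel)"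
    by (rule nn_integral_add) auto
  also have "(\<integral>\<^sup>+x. G \<bar>x\<bar> * indicator {..<0} x \<partial>lborel) = (\<integral>\<^sup>+x. G \<bar>0 + (-1) * x\<bar> * indicator {..<0} (0 + (-1) * x) \<partial>lborel)"
    by (subst nn_integral_real_affine[where c="-1" and t=0]) auto
  also have "\<dots> = (\<integral>\<^sup>+x. G x * indicator {0<..} x \<partial>lborel)"
    by (intro nn_integral_cong) (auto split: split_indicator)
  also have "(\<integral>\<^sup>+x. G \<bar>x\<bar> * indicator {0<..} x \<partial>lborel) = (\<integral>\<^sup>+x. G x * indicator {0<..} x \<partial>lborel)"
    by (intro nn_integral_cong) (auto split: split_indicator)
  finally show ?thesis by (simp add: mult_2)
qed

lemma ennreal_num_mult: "0 \<le> a \<Longrightarrow> numeral n * ennreal a = ennreal (numeral n * a)"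
  by (simp add: ennreal_mult)

lemma nn_integral_arctan_line: "(\<integral>\<^sup>+s. ennreal (1 / (1 + s\<^sup>2)) \<partial>lborel) = ennreal pi"
proof -
  have "(\<integral>\<^sup>+s. ennreal (1 / (1 + s\<^sup>2)) \<partial>lborel) = (\<integral>\<^sup>+s. (\<lambda>u. ennreal (1 / (1 + u\<^sup>2))) \<bar>s\<bar> \<partial>lborel)"
    by simp
  also have "\<dots> = 2 * (\<integral>\<^sup>+s. ennreal (1 / (1 + s\<^sup>2)) * indicator {0<..} s \<partial>lborel)"
    by (rule nn_integral_abs_sym) auto
  also have "(\<integral>\<^sup>+s. ennreal (1 / (1 + s\<^sup>2)) * indicator {0<..} s \<partial>lborel)
      = (\<integral>\<^sup>+s. ennreal (1 / (1 + s\<^sup>2)) * indicator {0..} s \<partial>lborel)"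
    by (intro nn_integral_cong_AE AE_I[where N="{0}"]) (auto split: split_indicator)
  also have "\<dots> = ennreal (pi / 2 - arctan 0)"
  proof (rule nn_integral_FTC_atLeast)
    show "(arctan \<longlongrightarrow> pi / 2) at_top" by (rule tendsto_arctan_at_top)
  qed (auto intro!: derivative_eq_intros simp: add_nonneg_eq_0_iff field_simps power2_eq_square)
  finally show ?thesis by (simp add: ennreal_num_mult)
qed

lemma radial_integral:
  fixes F :: "real \<Rightarrow> ennreal"
  assumes [measurable]: "F \<in> borel_measurable borel"
  shows "(\<integral>\<^sup>+x. \<integral>\<^sup>+y. F (sqrt (x\<^sup>2 + y\<^sup>2)) \<partial>lborel \<partial>lborel)
         = 2 * pi * (\<integral>\<^sup>+r. ennreal r * F r * indicator {0<..} r \<partial>lborel)"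
proof -
  define I where "I = (\<integral>\<^sup>+r. ennreal r * F r * indicator {0<..} r \<partial>lborel)"
  have inner: "(\<integral>\<^sup>+x. ennreal \<bar>x\<bar> * F (\<bar>x\<bar> * c) \<partial>lborel) = ennreal (2 / c\<^sup>2) * I" if c: "c > 0" for c :: real
  proof -
    have 1: "(\<integral>\<^sup>+x. ennreal \<bar>x\<bar> * F (\<bar>x\<bar> * c) \<partial>lborel) = 2 * (\<integral>\<^sup>+x. ennreal x * F (x * c) * indicator {0<..} x \<partial>lborel)"
      using nn_integral_abs_sym[of "\<lambda>u. ennreal u * F (u * c)"] by simp
    have 2: "(\<integral>\<^sup>+x. ennreal x * F (x * c) * indicator {0<..} x \<partial>lborel)
       = ennreal \<bar>1/c\<bar> * (\<integral>\<^sup>+x. ennreal (0 + 1/c * x) * F ((0 + 1/c * x) * c) * indicator {0<..} (0 + 1/c * x) \<partial>lborel)"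
      using c by (subst nn_integral_real_affine[where c="1/c" and t=0]) auto
    have 3: "(\<integral>\<^sup>+x. ennreal (0 + 1/c * x) * F ((0 + 1/c * x) * c) * indicator {0<..} (0 + 1/c * x) \<partial>lborel)
       = (\<integral>\<^sup>+x. ennreal (1/c) * (ennreal x * F x * indicator {0<..} x) \<partial>lborel)"
      using c by (intro nn_integral_cong) (auto split: split_indicator simp: ennreal_mult[symmetric] zero_less_mult_iff zero_less_divide_iff mult.assoc[symmetric])
    have 4: "(\<integral>\<^sup>+x. ennreal (1/c) * (ennreal x * F x * indicator {0<..} x) \<partial>lborel) = ennreal (1/c) * I"
      unfolding I_def by (rule nn_integral_cmult) auto
    have 5: "ennreal (2 * \<bar>1/c\<bar> * (1/c)) = 2 * ennreal \<bar>1/c\<bar> * ennreal (1/c)"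
      using c by (metis ennreal_mult ennreal_numeral zero_le_numeral abs_ge_zero divide_nonneg_nonneg less_imp_le zero_le_one mult_nonneg_nonneg)
    have 6: "2 * \<bar>1/c\<bar> * (1/c) = 2 / c\<^sup>2" using c by (simp add: power2_eq_square)
    show ?thesis unfolding 1 2 3 4 6[symmetric] 5 by (simp add: mult.assoc)
  qed
  have "(\<integral>\<^sup>+x. \<integral>\<^sup>+y. F (sqrt (x\<^sup>2 + y\<^sup>2)) \<partial>lborel \<partial>lborel)
      = (\<integral>\<^sup>+x. \<integral>\<^sup>+s. ennreal \<bar>x\<bar> * F (\<bar>x\<bar> * sqrt (1 + s\<^sup>2)) \<partial>lborel \<partial>lborel)"
  proof -
   have eq: "(\<integral>\<^sup>+y. F (sqrt (x\<^sup>2 + y\<^sup>2)) \<partial>lborel) = (\<integral>\<^sup>+s. ennreal \<bar>x\<bar> * F (\<bar>x\<bar> * sqrt (1 + s\<^sup>2)) \<partial>lborel)" if x: "x \<noteq> 0" for x :: real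
   proof -
    have "(\<integral>\<^sup>+y. F (sqrt (x\<^sup>2 + y\<^sup>2)) \<partial>lborel) = ennreal \<bar>x\<bar> * (\<integral>\<^sup>+s. F (sqrt (x\<^sup>2 + (0 + x * s)\<^sup>2)) \<partial>lborel)"
      using x by (subst nn_integral_real_affine[where c=x and t=0]) auto
    also have "\<dots> = (\<integral>\<^sup>+s. ennreal \<bar>x\<bar> * F (\<bar>x\<bar> * sqrt (1 + s\<^sup>2)) \<partial>lborel)"
    proof (subst nn_integral_cmult[symmetric], simp, intro nn_integral_cong)
      fix s :: real
      have "sqrt (x\<^sup>2 + (0 + x * s)\<^sup>2) = sqrt (x\<^sup>2 * (1 + s\<^sup>2))" by (simp add: algebra_simps power_mult_distrib)
      also have "\<dots> = \<bar>x\<bar> * sqrt (1 + s\<^sup>2)" by (simp add: real_sqrt_mult)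
      finally show "ennreal \<bar>x\<bar> * F (sqrt (x\<^sup>2 + (0 + x * s)\<^sup>2)) = ennreal \<bar>x\<bar> * F (\<bar>x\<bar> * sqrt (1 + s\<^sup>2))" by simp
    qed
    finally show ?thesis .
   qed
   show ?thesis by (intro nn_integral_cong_AE AE_I[where N="{0}"]) (auto intro: eq)
  qed
  also have "\<dots> = (\<integral>\<^sup>+s. \<integral>\<^sup>+x. ennreal \<bar>x\<bar> * F (\<bar>x\<bar> * sqrt (1 + s\<^sup>2)) \<partial>lborel \<partial>lborel)"
    by (rule lborel_pair.Fubini'[symmetric]) auto
  also have "\<dots> = (\<integral>\<^sup>+s. ennreal (2 / (sqrt (1 + s\<^sup>2))\<^sup>2) * I \<partial>lborel)"
    by (intro nn_integral_cong inner) (auto intro: add_pos_nonneg)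
  also have "\<dots> = (\<integral>\<^sup>+s. ennreal 2 * ennreal (1 / (1 + s\<^sup>2)) * I \<partial>lborel)"
    by (intro nn_integral_cong) (auto simp: ennreal_num_mult add_nonneg_eq_0_iff)
  also have "\<dots> = ennreal 2 * (\<integral>\<^sup>+s. ennreal (1 / (1 + s\<^sup>2)) \<partial>lborel) * I"
    by (simp add: nn_integral_cmult nn_integral_multc mult.assoc)
  also have "\<dots> = 2 * pi * I"
    by (simp add: nn_integral_arctan_line ennreal_num_mult)
  finally show ?thesis unfolding I_def .
qed


lemma hb_nn:
  assumes "has_bochner_integral M f x" "\<And>y. 0 \<le> f y"
  shows "(\<integral>\<^sup>+y. ennreal (f y) \<partial>M) = ennreal x"
  using nn_integral_eq_integral[OF integrable.intros[OF assms(1)]] has_bochner_integral_integral_eq[OF assms(1)] assms(2)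
  by simp

lemma gauss_half0: "(\<integral>\<^sup>+t. ennreal (exp (- t\<^sup>2)) * indicator {0..} t \<partial>lborel) = ennreal (sqrt pi / 2)"
proof -
  have "(\<integral>\<^sup>+t. ennreal (exp (- t\<^sup>2)) * indicator {0..} t \<partial>lborel) = (\<integral>\<^sup>+t. ennreal (indicator {0..} t *\<^sub>R exp (- t\<^sup>2)) \<partial>lborel)"
    by (intro nn_integral_cong) (auto split: split_indicator)
  also have "\<dots> = ennreal (sqrt pi / 2)"
    by (rule hb_nn[OF gaussian_moment_0]) auto
  finally show ?thesis .
qed

lemma gauss_half2: "(\<integral>\<^sup>+t. ennreal (t\<^sup>2 * exp (- t\<^sup>2)) * indicator {0..} t \<partial>lborel) = ennreal (sqrt pi / 4)"
proof -
  have "(\<integral>\<^sup>+t. ennreal (t\<^sup>2 * exp (- t\<^sup>2)) * indicator {0..} t \<partial>lborel) = (\<integral>\<^sup>+t. ennreal (indicator {0..} t *\<^sub>R (exp (- t\<^sup>2) * t ^ (2 * 1))) \<partial>lborel)"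
    by (intro nn_integral_cong) (auto split: split_indicator)
  also have "\<dots> = ennreal ((sqrt pi / 2) * (fact (2 * 1) / (2 ^ (2 * 1) * fact 1)))"
    by (rule hb_nn[OF gaussian_moment_even_pos]) auto
  also have "(sqrt pi / 2) * (fact (2 * 1) / (2 ^ (2 * 1) * fact 1)) = sqrt pi / 4"
    by (simp add: fact_numeral)
  finally show ?thesis .
qed

lemma measurable_Complex_pair[measurable]: "(\<lambda>(x, y). Complex x y) \<in> borel_measurable (borel \<Otimes>\<^sub>M borel)"
proof -
  have "(\<lambda>(x, y). Complex x y) = (\<lambda>p. complex_of_real (fst p) + \<i> * complex_of_real (snd p))"
    by (auto simp: fun_eq_iff complex_eq_iff)
  then show ?thesis by simp
qed

lemma prob_space_cgauss: "s > 0 \<Longrightarrow> prob_space (cgauss s)"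
  unfolding cgauss_def
  by (intro prob_space.prob_space_distr prob_space_pair prob_space_normal_density) auto

lemma cgauss_radial:
  fixes \<phi> :: "real \<Rightarrow> ennreal"
  assumes [measurable]: "\<phi> \<in> borel_measurable borel" and s: "s > 0"
  shows "(\<integral>\<^sup>+z. \<phi> (cmod z) \<partial>cgauss s)
       = ennreal (2 / s\<^sup>2) * (\<integral>\<^sup>+r. ennreal (r * exp (- r\<^sup>2 / s\<^sup>2)) * \<phi> r * indicator {0<..} r \<partial>lborel)"
proof -
  define D where "D = density lborel (normal_density 0 (s / sqrt 2))"
  interpret D: prob_space D unfolding D_def using s by (intro prob_space_normal_density) auto
  define F where "F r = ennreal (1 / (pi * s\<^sup>2)) * ennreal (exp (- r\<^sup>2 / s\<^sup>2)) * \<phi> r" for r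
  have [measurable]: "F \<in> borel_measurable borel" unfolding F_def by measurable
  have nd: "normal_density 0 (s / sqrt 2) x * normal_density 0 (s / sqrt 2) y = 1 / (pi * s\<^sup>2) * exp (- (sqrt (x\<^sup>2 + y\<^sup>2))\<^sup>2 / s\<^sup>2)" for x y
  proof -
    have "normal_density 0 (s / sqrt 2) x * normal_density 0 (s / sqrt 2) y
        = (1 / sqrt (pi * s\<^sup>2))\<^sup>2 * (exp (- x\<^sup>2 / s\<^sup>2) * exp (- y\<^sup>2 / s\<^sup>2))"
      unfolding normal_density_def by (simp add: power_divide power2_eq_square)
    also have "(1 / sqrt (pi * s\<^sup>2))\<^sup>2 = 1 / (pi * s\<^sup>2)" using s by (simp add: power_divide)
    also have "exp (- x\<^sup>2 / s\<^sup>2) * exp (- y\<^sup>2 / s\<^sup>2) = exp (- (sqrt (x\<^sup>2 + y\<^sup>2))\<^sup>2 / s\<^sup>2)"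
      by (simp add: exp_add[symmetric] diff_divide_distrib)
    finally show ?thesis .
  qed
  have "(\<integral>\<^sup>+z. \<phi> (cmod z) \<partial>cgauss s) = (\<integral>\<^sup>+p. \<phi> (cmod (case p of (x, y) \<Rightarrow> Complex x y)) \<partial>(D \<Otimes>\<^sub>M D))"
    unfolding cgauss_def D_def by (subst nn_integral_distr) (auto simp: case_prod_unfold)
  also have "\<dots> = (\<integral>\<^sup>+x. \<integral>\<^sup>+y. \<phi> (sqrt (x\<^sup>2 + y\<^sup>2)) \<partial>D \<partial>D)"
  proof -
    have sD: "sets D = sets borel" unfolding D_def by simp
    have m: "(\<lambda>p. \<phi> (cmod (case p of (x, y) \<Rightarrow> Complex x y))) \<in> borel_measurable (D \<Otimes>\<^sub>M D)"
      by (subst measurable_cong_sets[OF sets_pair_measure_cong[OF sD sD] refl]) measurable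
    show ?thesis
      using D.nn_integral_fst[OF m] by (simp add: complex_norm)
  qed
  also have "\<dots> = (\<integral>\<^sup>+x. \<integral>\<^sup>+y. F (sqrt (x\<^sup>2 + y\<^sup>2)) \<partial>lborel \<partial>lborel)"
  proof -
    have dens: "(\<integral>\<^sup>+x. G x \<partial>D) = (\<integral>\<^sup>+x. ennreal (normal_density 0 (s / sqrt 2) x) * G x \<partial>lborel)"
      if [measurable]: "G \<in> borel_measurable borel" for G
      unfolding D_def by (rule nn_integral_density) auto
    have m1: "(\<lambda>x. \<integral>\<^sup>+y. ennreal (normal_density 0 (s / sqrt 2) y) * \<phi> (sqrt (x\<^sup>2 + y\<^sup>2)) \<partial>lborel) \<in> borel_measurable borel"
      by measurable
    have "(\<integral>\<^sup>+x. \<integral>\<^sup>+y. \<phi> (sqrt (x\<^sup>2 + y\<^sup>2)) \<partial>D \<partial>D)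
       = (\<integral>\<^sup>+x. \<integral>\<^sup>+y. ennreal (normal_density 0 (s / sqrt 2) y) * \<phi> (sqrt (x\<^sup>2 + y\<^sup>2)) \<partial>lborel \<partial>D)"
      by (intro nn_integral_cong dens) measurable
    also have "\<dots> = (\<integral>\<^sup>+x. ennreal (normal_density 0 (s / sqrt 2) x) * (\<integral>\<^sup>+y. ennreal (normal_density 0 (s / sqrt 2) y) * \<phi> (sqrt (x\<^sup>2 + y\<^sup>2)) \<partial>lborel) \<partial>lborel)"
      by (rule dens[OF m1])
    also have "\<dots> = (\<integral>\<^sup>+x. \<integral>\<^sup>+y. ennreal (normal_density 0 (s / sqrt 2) x) * (ennreal (normal_density 0 (s / sqrt 2) y) * \<phi> (sqrt (x\<^sup>2 + y\<^sup>2))) \<partial>lborel \<partial>lborel)"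
      by (intro nn_integral_cong nn_integral_cmult[symmetric]) measurable
    also have "\<dots> = (\<integral>\<^sup>+x. \<integral>\<^sup>+y. F (sqrt (x\<^sup>2 + y\<^sup>2)) \<partial>lborel \<partial>lborel)"
    proof (intro nn_integral_cong)
      fix x y :: real
      have "ennreal (normal_density 0 (s / sqrt 2) x) * (ennreal (normal_density 0 (s / sqrt 2) y) * \<phi> (sqrt (x\<^sup>2 + y\<^sup>2)))
         = ennreal (normal_density 0 (s / sqrt 2) x * normal_density 0 (s / sqrt 2) y) * \<phi> (sqrt (x\<^sup>2 + y\<^sup>2))"
        by (simp add: ennreal_mult mult.assoc)
      also have "\<dots> = F (sqrt (x\<^sup>2 + y\<^sup>2))"
        unfolding nd F_def using s by (simp add: ennreal_mult'[symmetric])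
      finally show "ennreal (normal_density 0 (s / sqrt 2) x) * (ennreal (normal_density 0 (s / sqrt 2) y) * \<phi> (sqrt (x\<^sup>2 + y\<^sup>2))) = F (sqrt (x\<^sup>2 + y\<^sup>2))" .
    qed
    finally show ?thesis .
  qed
  also have "\<dots> = 2 * pi * (\<integral>\<^sup>+r. ennreal r * F r * indicator {0<..} r \<partial>lborel)"
    by (rule radial_integral) simp
  also have "\<dots> = ennreal (2 / s\<^sup>2) * (\<integral>\<^sup>+r. ennreal (r * exp (- r\<^sup>2 / s\<^sup>2)) * \<phi> r * indicator {0<..} r \<partial>lborel)"
  proof -
    have "(\<integral>\<^sup>+r. ennreal r * F r * indicator {0<..} r \<partial>lborel)
        = (\<integral>\<^sup>+r. ennreal (1 / (pi * s\<^sup>2)) * (ennreal (r * exp (- r\<^sup>2 / s\<^sup>2)) * \<phi> r * indicator {0<..} r) \<partial>lborel)"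
      by (intro nn_integral_cong) (auto simp: F_def ennreal_mult' mult_ac split: split_indicator)
    also have "\<dots> = ennreal (1 / (pi * s\<^sup>2)) * (\<integral>\<^sup>+r. ennreal (r * exp (- r\<^sup>2 / s\<^sup>2)) * \<phi> r * indicator {0<..} r \<partial>lborel)"
      by (rule nn_integral_cmult) auto
    finally show ?thesis using s
      by (simp add: ennreal_mult[symmetric] mult.assoc[symmetric] ennreal_num_mult)
  qed
  finally show ?thesis .
qed

lemma cgauss_abs:
  assumes s: "s > 0"
  shows "(\<integral>\<^sup>+z. ennreal (cmod z) \<partial>cgauss s) = ennreal (s * sqrt pi / 2)"
proof -
  have "(\<integral>\<^sup>+z. ennreal (cmod z) \<partial>cgauss s)
     = ennreal (2 / s\<^sup>2) * (\<integral>\<^sup>+r. ennreal (r * exp (- r\<^sup>2 / s\<^sup>2)) * ennreal r * indicator {0<..} r \<partial>lborel)"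
    by (rule cgauss_radial) (auto simp: s)
  also have "(\<integral>\<^sup>+r. ennreal (r * exp (- r\<^sup>2 / s\<^sup>2)) * ennreal r * indicator {0<..} r \<partial>lborel)
     = (\<integral>\<^sup>+r. ennreal (r\<^sup>2 * exp (- r\<^sup>2 / s\<^sup>2)) * indicator {0..} r \<partial>lborel)"
    by (intro nn_integral_cong_AE AE_I[where N="{0}"])
       (auto split: split_indicator simp: ennreal_mult'[symmetric] power2_eq_square mult_ac)
  also have "\<dots> = ennreal \<bar>s\<bar> * (\<integral>\<^sup>+t. ennreal ((0 + s * t)\<^sup>2 * exp (- (0 + s * t)\<^sup>2 / s\<^sup>2)) * indicator {0..} (0 + s * t) \<partial>lborel)"
    using s by (intro nn_integral_real_affine) auto
  also have "(\<integral>\<^sup>+t. ennreal ((0 + s * t)\<^sup>2 * exp (- (0 + s * t)\<^sup>2 / s\<^sup>2)) * indicator {0..} (0 + s * t) \<partial>lborel)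
     = (\<integral>\<^sup>+t. ennreal (s\<^sup>2) * (ennreal (t\<^sup>2 * exp (- t\<^sup>2)) * indicator {0..} t) \<partial>lborel)"
    using s by (intro nn_integral_cong)
       (auto split: split_indicator simp: ennreal_mult'[symmetric] power_mult_distrib zero_le_mult_iff)
  also have "\<dots> = ennreal (s\<^sup>2) * ennreal (sqrt pi / 4)"
    by (subst nn_integral_cmult) (auto simp: gauss_half2)
  also have "ennreal (2 / s\<^sup>2) * (ennreal \<bar>s\<bar> * (ennreal (s\<^sup>2) * ennreal (sqrt pi / 4))) = ennreal (2 / s\<^sup>2 * (\<bar>s\<bar> * (s\<^sup>2 * (sqrt pi / 4))))"
    by (metis ennreal_mult abs_ge_zero zero_le_power2 divide_nonneg_nonneg real_sqrt_ge_zero pi_ge_zero zero_le_numeral mult_nonneg_nonneg)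
  also have "2 / s\<^sup>2 * (\<bar>s\<bar> * (s\<^sup>2 * (sqrt pi / 4))) = s * sqrt pi / 2"
    using s by (simp add: field_simps power2_eq_square)
  finally show ?thesis .
qed

lemma cgauss_inv_abs:
  assumes s: "s > 0"
  shows "(\<integral>\<^sup>+z. ennreal (1 / cmod z) \<partial>cgauss s) = ennreal (sqrt pi / s)"
proof -
  have 1: "(\<integral>\<^sup>+z. ennreal (1 / cmod z) \<partial>cgauss s) = ennreal (2 / s\<^sup>2) * (\<integral>\<^sup>+r. ennreal (r * exp (- r\<^sup>2 / s\<^sup>2)) * ennreal (1 / r) * indicator {0<..} r \<partial>lborel)"
    using cgauss_radial[of "\<lambda>r. ennreal (1 / r)" s] s by simp
  have 2: "(\<integral>\<^sup>+r. ennreal (r * exp (- r\<^sup>2 / s\<^sup>2)) * ennreal (1 / r) * indicator {0<..} r \<partial>lborel)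
     = (\<integral>\<^sup>+r. ennreal (exp (- r\<^sup>2 / s\<^sup>2)) * indicator {0..} r \<partial>lborel)"
    by (intro nn_integral_cong_AE AE_I[where N="{0}"])
       (auto split: split_indicator simp: ennreal_mult'[symmetric])
  have 3: "(\<integral>\<^sup>+r. ennreal (exp (- r\<^sup>2 / s\<^sup>2)) * indicator {0..} r \<partial>lborel) = ennreal \<bar>s\<bar> * (\<integral>\<^sup>+t. ennreal (exp (- (0 + s * t)\<^sup>2 / s\<^sup>2)) * indicator {0..} (0 + s * t) \<partial>lborel)"
    using s by (intro nn_integral_real_affine) auto
  have 4: "(\<integral>\<^sup>+t. ennreal (exp (- (0 + s * t)\<^sup>2 / s\<^sup>2)) * indicator {0..} (0 + s * t) \<partial>lborel)
     = (\<integral>\<^sup>+t. ennreal (exp (- t\<^sup>2)) * indicator {0..} t \<partial>lborel)"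
    using s by (intro nn_integral_cong)
       (auto split: split_indicator simp: power_mult_distrib zero_le_mult_iff)
  have 5: "ennreal (2 / s\<^sup>2) * (ennreal \<bar>s\<bar> * ennreal (sqrt pi / 2)) = ennreal (2 / s\<^sup>2 * (\<bar>s\<bar> * (sqrt pi / 2)))"
    by (metis ennreal_mult abs_ge_zero zero_le_power2 divide_nonneg_nonneg real_sqrt_ge_zero pi_ge_zero zero_le_numeral mult_nonneg_nonneg)
  have 6: "2 / s\<^sup>2 * (\<bar>s\<bar> * (sqrt pi / 2)) = sqrt pi / s"
    using s by (simp add: field_simps power2_eq_square)
  show ?thesis unfolding 1 2 3 4 gauss_half0 5 6 ..
qed


lemma onorm_mat_le_norm: "onorm ((*v) (A::real^'n^'m)) \<le> real CARD('m) * real CARD('n) * norm A"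
proof (rule onorm_le_matrix_component)
  fix i j
  show "\<bar>A $ i $ j\<bar> \<le> norm A"
    using component_le_norm_cart[of "A $ i" j] Finite_Cartesian_Product.norm_nth_le[of A i] by linarith
qed

lemma onorm_mat_lip:
  "\<bar>onorm ((*v) (A::real^'n^'m)) - onorm ((*v) B)\<bar> \<le> real CARD('m) * real CARD('n) * norm (A - B)"
proof -
  have tri: "onorm ((*v) X) \<le> onorm ((*v) Y) + onorm ((*v) (X - Y))" for X Y :: "real^'n^'m"
  proof -
    have "onorm ((*v) X) = onorm (\<lambda>x. Y *v x + (X - Y) *v x)"
      by (simp add: matrix_vector_mult_diff_rdistrib)
    also have "\<dots> \<le> onorm ((*v) Y) + onorm ((*v) (X - Y))"
      by (rule onorm_triangle) auto
    finally show ?thesis .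
  qed
  have "onorm ((*v) A) - onorm ((*v) B) \<le> real CARD('m) * real CARD('n) * norm (A - B)"
    using tri[of A B] onorm_mat_le_norm[of "A - B"] by linarith
  moreover have "onorm ((*v) B) - onorm ((*v) A) \<le> real CARD('m) * real CARD('n) * norm (A - B)"
    using tri[of B A] onorm_mat_le_norm[of "B - A"] by (simp add: norm_minus_commute)
  ultimately show ?thesis by linarith
qed

lemma continuous_on_onorm_mat: "continuous_on S (\<lambda>A::real^'n^'m. onorm ((*v) A))"
proof -
  have "(real CARD('m) * real CARD('n))-lipschitz_on S (\<lambda>A::real^'n^'m. onorm ((*v) A))"
    by (rule lipschitz_onI) (auto simp: dist_real_def dist_norm onorm_mat_lip)
  then show ?thesis by (rule lipschitz_on_continuous_on)
qed

lemma continuous_on_onorm_mat'[continuous_intros]: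
  "continuous_on S f \<Longrightarrow> continuous_on S (\<lambda>x. onorm ((*v) (f x :: real^'n^'m)))"
  using continuous_on_compose2[OF continuous_on_onorm_mat[of UNIV]] by auto

lemma measurable_onorm_mat[measurable]: "(\<lambda>A::real^'n^'m. onorm ((*v) A)) \<in> borel_measurable borel"
  by (rule borel_measurable_continuous_onI[OF continuous_on_onorm_mat])

lemma d_ch_measurable[measurable]: "(\<lambda>w. d_ch w c) \<in> borel_measurable borel"
proof -
  have "(\<lambda>w. d_ch w c) = (\<lambda>w. (\<lambda>A. onorm ((*v) A)) (fst w - fst c) + norm (snd w - snd c))"
    unfolding d_ch_def by (simp add: fun_eq_iff)
  also have "\<dots> \<in> borel_measurable borel"
    by (intro borel_measurable_continuous_onI continuous_intros)
  finally show ?thesis .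
qed

lemma re_im_continuous: "continuous_on S re_im"
  unfolding re_im_def
proof (rule continuous_on_vec_lambda)
  fix i :: 2
  show "continuous_on S (\<lambda>x. if i = 1 then Re x else Im x)"
    by (cases "i = 1") (auto intro: continuous_intros)
qed

lemma re_im_measurable[measurable]: "re_im \<in> borel_measurable borel"
  by (rule borel_measurable_continuous_onI[OF re_im_continuous])

lemma norm_re_im: "norm (re_im z) = cmod z"
  by (simp add: norm_vec_def L2_set_def sum_2 re_im_def cmod_def)

lemma d_ch_I0: "d_ch (mat 1, b) (mat 1, 0) = norm b"
  by (simp add: d_ch_def onorm_zero)

lemma ennreal_mult3: "0 \<le> a \<Longrightarrow> 0 \<le> b \<Longrightarrow> 0 \<le> c \<Longrightarrow> ennreal a * (ennreal b * ennreal c) = ennreal (a * (b * c))"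
  by (simp add: ennreal_mult)

lemma (in prob_space) indep_var_nn_integral_mult:
  fixes g h :: "_ \<Rightarrow> ennreal"
  assumes ind: "indep_var borel X borel Y"
    and [measurable]: "g \<in> borel_measurable borel" "h \<in> borel_measurable borel"
  shows "(\<integral>\<^sup>+\<omega>. g (X \<omega>) * h (Y \<omega>) \<partial>M) = (\<integral>\<^sup>+x. g x \<partial>distr M borel X) * (\<integral>\<^sup>+y. h y \<partial>distr M borel Y)"
proof -
  have rvX[measurable]: "X \<in> borel_measurable M" and rvY[measurable]: "Y \<in> borel_measurable M"
    and eq: "distr M borel X \<Otimes>\<^sub>M distr M borel Y = distr M (borel \<Otimes>\<^sub>M borel) (\<lambda>x. (X x, Y x))"
    using ind unfolding indep_var_distribution_eq by auto
  interpret DY: prob_space "distr M borel Y" by (rule prob_space_distr) simp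
  have "(\<integral>\<^sup>+\<omega>. g (X \<omega>) * h (Y \<omega>) \<partial>M) = (\<integral>\<^sup>+p. g (fst p) * h (snd p) \<partial>distr M (borel \<Otimes>\<^sub>M borel) (\<lambda>x. (X x, Y x)))"
    by (subst nn_integral_distr) auto
  also have "\<dots> = (\<integral>\<^sup>+p. g (fst p) * h (snd p) \<partial>(distr M borel X \<Otimes>\<^sub>M distr M borel Y))"
    unfolding eq ..
  also have "\<dots> = (\<integral>\<^sup>+x. \<integral>\<^sup>+y. g x * h y \<partial>distr M borel Y \<partial>distr M borel X)"
    by (subst DY.nn_integral_fst[symmetric]) auto
  also have "\<dots> = (\<integral>\<^sup>+x. g x * (\<integral>\<^sup>+y. h y \<partial>distr M borel Y) \<partial>distr M borel X)"
    by (intro nn_integral_cong nn_integral_cmult) auto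
  also have "\<dots> = (\<integral>\<^sup>+x. g x \<partial>distr M borel X) * (\<integral>\<^sup>+y. h y \<partial>distr M borel Y)"
    by (rule nn_integral_multc) auto
  finally show ?thesis .
qed

lemma measurable_chan_map[measurable]:
  assumes [measurable]: "f \<in> borel_measurable M"
  shows "(\<lambda>\<omega>. (mat 1, re_im (f \<omega>)) :: chw) \<in> borel_measurable M"
proof -
  have "(\<lambda>\<omega>. (mat 1, re_im (f \<omega>)) :: chw) \<in> M \<rightarrow>\<^sub>M (borel \<Otimes>\<^sub>M borel)"
    by measurable
  then show ?thesis by (simp add: borel_prod)
qed

lemma channel_penalty_nn:
  fixes H0 N0 :: "'a \<Rightarrow> complex"
  assumes M: "prob_space M" and [measurable]: "H0 \<in> borel_measurable M" "N0 \<in> borel_measurable M"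
    and H0_dist: "distr M borel H0 = cgauss 1" and N0_dist: "distr M borel N0 = cgauss \<sigma>0"
    and indep: "prob_space.indep_var M borel H0 borel N0" and P: "P > 0" and \<sigma>0: "\<sigma>0 > 0"
    and C: "C = distr M borel (\<lambda>\<omega>. (mat 1, re_im (N0 \<omega> / (complex_of_real (sqrt P) * H0 \<omega>))) :: chw)"
  shows "(\<integral>\<^sup>+w'. ennreal (d_ch w' (mat 1, 0)) \<partial>C) = ennreal (pi / (2 * sqrt (P / \<sigma>0\<^sup>2)))"
proof -
  interpret prob_space M by (rule M)
  have "(\<integral>\<^sup>+w'. ennreal (d_ch w' (mat 1, 0)) \<partial>C)
      = (\<integral>\<^sup>+\<omega>. ennreal (d_ch (mat 1, re_im (N0 \<omega> / (complex_of_real (sqrt P) * H0 \<omega>))) (mat 1, 0)) \<partial>M)"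
    unfolding C by (subst nn_integral_distr) auto
  also have "\<dots> = (\<integral>\<^sup>+\<omega>. ennreal (1 / sqrt P) * (ennreal (1 / cmod (H0 \<omega>)) * ennreal (cmod (N0 \<omega>))) \<partial>M)"
  proof (intro nn_integral_cong)
    fix \<omega>
    have cm: "cmod (N0 \<omega> / (complex_of_real (sqrt P) * H0 \<omega>)) = 1 / sqrt P * (1 / cmod (H0 \<omega>) * cmod (N0 \<omega>))"
      using P by (simp add: norm_divide norm_mult)
    show "ennreal (d_ch (mat 1, re_im (N0 \<omega> / (complex_of_real (sqrt P) * H0 \<omega>))) (mat 1, 0))
        = ennreal (1 / sqrt P) * (ennreal (1 / cmod (H0 \<omega>)) * ennreal (cmod (N0 \<omega>)))"
      proof -
      have nn: "0 \<le> 1 / sqrt P" "0 \<le> 1 / cmod (H0 \<omega>)" "0 \<le> cmod (N0 \<omega>)" "0 \<le> 1 / cmod (H0 \<omega>) * cmod (N0 \<omega>)"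
        using P by auto
      show ?thesis unfolding d_ch_I0 norm_re_im cm by (simp only: ennreal_mult[symmetric] nn)
    qed
  qed
  also have "\<dots> = ennreal (1 / sqrt P) * (\<integral>\<^sup>+\<omega>. ennreal (1 / cmod (H0 \<omega>)) * ennreal (cmod (N0 \<omega>)) \<partial>M)"
    by (rule nn_integral_cmult) auto
  also have "(\<integral>\<^sup>+\<omega>. ennreal (1 / cmod (H0 \<omega>)) * ennreal (cmod (N0 \<omega>)) \<partial>M)
      = (\<integral>\<^sup>+x. ennreal (1 / cmod x) \<partial>distr M borel H0) * (\<integral>\<^sup>+y. ennreal (cmod y) \<partial>distr M borel N0)"
    using indep_var_nn_integral_mult[OF indep, of "\<lambda>x. ennreal (1 / cmod x)" "\<lambda>y. ennreal (cmod y)"] by simp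
  also have "\<dots> = ennreal (sqrt pi / 1) * ennreal (\<sigma>0 * sqrt pi / 2)"
    unfolding H0_dist N0_dist using \<sigma>0 by (simp add: cgauss_inv_abs cgauss_abs)
  also have "ennreal (1 / sqrt P) * (ennreal (sqrt pi / 1) * ennreal (\<sigma>0 * sqrt pi / 2))
      = ennreal (1 / sqrt P * (sqrt pi / 1 * (\<sigma>0 * sqrt pi / 2)))"
    using \<sigma>0 P by (intro ennreal_mult3) auto
  also have "1 / sqrt P * (sqrt pi / 1 * (\<sigma>0 * sqrt pi / 2)) = pi / (2 * sqrt (P / \<sigma>0\<^sup>2))"
    using \<sigma>0 P by (simp add: real_sqrt_divide field_simps)
  finally show ?thesis .
qed


lemma DV_bound:
  fixes Q \<rho> :: "'t measure" and f :: "'t \<Rightarrow> real"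
  assumes Q: "prob_space Q" and \<rho>: "prob_space \<rho>" and sets: "sets \<rho> = sets Q"
    and ac: "absolutely_continuous Q \<rho>" and int: "integrable \<rho> (entropy_density (exp 1) Q \<rho>)"
    and f[measurable]: "f \<in> borel_measurable Q"
    and finU: "(\<integral>\<^sup>+t. ennreal (exp (f t)) \<partial>Q) \<le> ennreal U"
  shows "\<exists>h. integrable \<rho> h \<and> (AE t in \<rho>. f t \<le> h t) \<and>
           (\<integral>t. h t \<partial>\<rho>) \<le> KL_divergence (exp 1) Q \<rho> + ln U"
proof -
  have fin: "(\<integral>\<^sup>+t. ennreal (exp (f t)) \<partial>Q) < \<infinity>" using finU by (simp add: le_less_trans)
  interpret Q: prob_space Q by (rule Q)
  interpret \<rho>: prob_space \<rho> by (rule \<rho>)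
  have meq: "borel_measurable \<rho> = borel_measurable Q" by (rule measurable_cong_sets[OF sets refl])
  define g where "g = RN_deriv Q \<rho>"
  have g_meas[measurable]: "g \<in> borel_measurable Q" unfolding g_def by simp
  have dens: "density Q g = \<rho>" unfolding g_def by (rule Q.density_RN_deriv[OF ac sets])
  define I where "I = (\<integral>\<^sup>+t. ennreal (exp (f t)) \<partial>Q)"
  define c where "c = enn2real I"
  have "I \<noteq> 0"
  proof
    assume "I = 0"
    then have "AE t in Q. ennreal (exp (f t)) = 0" unfolding I_def
      by (subst (asm) nn_integral_0_iff_AE) auto
    then have "AE t in Q. False" by simp
    then show False by simp
  qed
  then have c_pos: "c > 0" and I_eq: "I = ennreal c"
    using fin unfolding c_def I_def[symmetric] by (auto simp: enn2real_positive_iff less_top[symmetric] zero_less_iff_neq_zero)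
  define gr where "gr t = enn2real (g t)" for t
  define y where "y t = exp (f t) / (c * gr t)" for t
  define h where "h t = ln (gr t) + ln c + y t - 1" for t
  have gr_meas[measurable]: "gr \<in> borel_measurable Q" unfolding gr_def by measurable
  have y_meas[measurable]: "y \<in> borel_measurable Q" unfolding y_def by measurable
  have ent: "entropy_density (exp 1) Q \<rho> = (\<lambda>t. ln (gr t))"
    by (simp add: entropy_density_def gr_def g_def log_def fun_eq_iff)
  have KL: "KL_divergence (exp 1) Q \<rho> = (\<integral>t. ln (gr t) \<partial>\<rho>)"
    unfolding KL_divergence_def ent ..
  have int_ln: "integrable \<rho> (\<lambda>t. ln (gr t))" using int unfolding ent .
  have AE_pos: "AE t in \<rho>. 0 < gr t"
  proof -
    have "AE t in Q. g t \<noteq> \<infinity>"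
      unfolding g_def by (rule Q.RN_deriv_finite[OF \<rho>.sigma_finite_measure ac sets])
    then have "AE t in Q. 0 < g t \<longrightarrow> 0 < gr t"
      by eventually_elim (auto simp: gr_def enn2real_positive_iff less_top)
    then show ?thesis unfolding dens[symmetric] by (subst AE_density) auto
  qed
  have fh: "AE t in \<rho>. f t \<le> h t"
    using AE_pos
  proof eventually_elim
    case (elim t)
    have ypos: "0 < y t" using elim c_pos by (simp add: y_def)
    have "ln (y t) = f t - ln c - ln (gr t)"
      using elim c_pos by (simp add: y_def ln_div ln_mult)
    moreover have "ln (y t) \<le> y t - 1" using ypos by (rule ln_le_minus_one)
    ultimately show ?case by (simp add: h_def)
  qed
  have y_nonneg: "y t \<ge> 0" for t using c_pos by (simp add: y_def gr_def)
  have y_nn: "(\<integral>\<^sup>+t. ennreal (y t) \<partial>\<rho>) \<le> 1"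
  proof -
    have "(\<integral>\<^sup>+t. ennreal (y t) \<partial>\<rho>) = (\<integral>\<^sup>+t. g t * ennreal (y t) \<partial>Q)"
      unfolding dens[symmetric] by (subst nn_integral_density) auto
    also have "\<dots> \<le> (\<integral>\<^sup>+t. ennreal (1 / c) * ennreal (exp (f t)) \<partial>Q)"
    proof (intro nn_integral_mono)
      fix t
      show "g t * ennreal (y t) \<le> ennreal (1 / c) * ennreal (exp (f t))"
      proof (cases "g t")
        case (real r)
        show ?thesis
        proof (cases "r = 0")
          case True then show ?thesis using real by simp
        next
          case False
          then have "r > 0" using real by auto
          then have "g t * ennreal (y t) = ennreal (r * y t)"
            using real c_pos y_nonneg[of t] \<open>r > 0\<close> by (simp add: ennreal_mult)
          also have "r * y t = 1 / c * exp (f t)"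
            using \<open>r > 0\<close> real c_pos by (simp add: y_def gr_def)
          finally show ?thesis using c_pos by (simp add: ennreal_mult'[symmetric])
        qed
      next
        case top
        then show ?thesis by (simp add: y_def gr_def)
      qed
    qed
    also have "\<dots> = ennreal (1 / c) * I"
      unfolding I_def by (rule nn_integral_cmult) auto
    also have "\<dots> = 1" using c_pos by (simp add: I_eq ennreal_mult[symmetric])
    finally show ?thesis .
  qed
  have int_y: "integrable \<rho> y"
    using y_nn y_nonneg by (intro integrableI_nonneg) (auto simp: meq top.not_eq_extremum order.strict_trans1)
  have int_y_le: "(\<integral>t. y t \<partial>\<rho>) \<le> 1"
  proof -
    have "ennreal (\<integral>t. y t \<partial>\<rho>) = (\<integral>\<^sup>+t. ennreal (y t) \<partial>\<rho>)"
      using int_y y_nonneg by (subst nn_integral_eq_integral) auto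
    with y_nn show ?thesis by (metis ennreal_le_1)
  qed
  have int_h: "integrable \<rho> h"
    unfolding h_def using int_ln int_y by auto
  have "(\<integral>t. h t \<partial>\<rho>) = (\<integral>t. ln (gr t) \<partial>\<rho>) + ln c + (\<integral>t. y t \<partial>\<rho>) - 1"
    unfolding h_def using int_ln int_y by (simp add: \<rho>.prob_space)
  also have "\<dots> \<le> KL_divergence (exp 1) Q \<rho> + ln c" using int_y_le KL by simp
  also have "ln c \<le> ln U"
  proof -
    have "ennreal c \<le> ennreal U" using finU I_eq unfolding I_def by simp
    then have "c \<le> U" using c_pos by (simp add: ennreal_le_iff2)
    then show ?thesis using c_pos by simp
  qed
  finally show ?thesis
    using int_h fh by (intro exI[of _ h]) (auto simp: add_mono)
qed


lemma subg_exp_bound: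
  assumes PZ: "prob_space PZ" and X[measurable]: "X \<in> borel_measurable PZ" and sg: "sub_gaussian PZ X \<sigma>"
  shows "(\<integral>\<^sup>+z. ennreal (exp (u * (X z - (\<integral>z'. X z' \<partial>PZ)))) \<partial>PZ) \<le> ennreal (exp (u\<^sup>2 * \<sigma>\<^sup>2 / 2))"
proof -
  from sg have int: "integrable PZ (\<lambda>z. exp (u * (X z - (\<integral>z'. X z' \<partial>PZ))))"
    and ln: "ln (\<integral>z. exp (u * (X z - (\<integral>z'. X z' \<partial>PZ))) \<partial>PZ) \<le> u\<^sup>2 * \<sigma>\<^sup>2 / 2"
    unfolding sub_gaussian_def by auto
  define E where "E = (\<integral>z. exp (u * (X z - (\<integral>z'. X z' \<partial>PZ))) \<partial>PZ)"
  have "E \<le> exp (u\<^sup>2 * \<sigma>\<^sup>2 / 2)"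
  proof (cases "E > 0")
    case True
    then have "E = exp (ln E)" by simp
    also have "\<dots> \<le> exp (u\<^sup>2 * \<sigma>\<^sup>2 / 2)" using ln unfolding E_def by simp
    finally show ?thesis .
  next
    case False
    then show ?thesis by (metis exp_gt_zero less_le_not_le linorder_le_less_linear order.trans)
  qed
  moreover have "(\<integral>\<^sup>+z. ennreal (exp (u * (X z - (\<integral>z'. X z' \<partial>PZ)))) \<partial>PZ) = ennreal E"
    unfolding E_def using int by (subst nn_integral_eq_integral) auto
  ultimately show ?thesis by simp
qed

lemma subg_mean_bound:
  assumes PZ: "prob_space PZ" and n: "n > 0"
    and X[measurable]: "X \<in> borel_measurable PZ" and sg: "sub_gaussian PZ X \<sigma>"
  shows "(\<integral>\<^sup>+S. ennreal (exp (lam * ((\<integral>z. X z \<partial>PZ) - (1 / real n) * (\<Sum>i<n. X (S i))))) \<partial>PiM {..<n} (\<lambda>_. PZ))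
         \<le> ennreal (exp (lam\<^sup>2 * \<sigma>\<^sup>2 / (2 * real n)))"
proof -
  interpret product_prob_space "\<lambda>_. PZ" "{..<n}"
    using PZ by (simp add: product_prob_space_def product_prob_space_axioms_def product_sigma_finite_def prob_space_imp_sigma_finite)
  define m where "m = (\<integral>z. X z \<partial>PZ)"
  define u where "u = - lam / real n"
  have eq: "exp (lam * (m - (1 / real n) * (\<Sum>i<n. X (S i)))) = (\<Prod>i<n. exp (u * (X (S i) - m)))" for S
  proof -
    have "lam * (m - (1 / real n) * (\<Sum>i<n. X (S i))) = (\<Sum>i<n. u * (X (S i) - m))"
    proof -
      have "(\<Sum>i<n. u * (X (S i) - m)) = u * (\<Sum>i<n. X (S i)) - real n * (u * m)"
        by (simp add: right_diff_distrib sum_subtractf sum_distrib_left[symmetric])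
      also have "\<dots> = lam * (m - (1 / real n) * (\<Sum>i<n. X (S i)))"
        using n by (simp add: u_def field_simps)
      finally show ?thesis by simp
    qed
    then show ?thesis by (simp add: exp_sum)
  qed
  have "(\<integral>\<^sup>+S. ennreal (exp (lam * (m - (1 / real n) * (\<Sum>i<n. X (S i))))) \<partial>PiM {..<n} (\<lambda>_. PZ))
      = (\<integral>\<^sup>+S. (\<Prod>i<n. ennreal (exp (u * (X (S i) - m)))) \<partial>PiM {..<n} (\<lambda>_. PZ))"
    by (intro nn_integral_cong, subst eq) (simp add: prod_ennreal)
  also have "\<dots> = (\<Prod>i<n. \<integral>\<^sup>+z. ennreal (exp (u * (X z - m))) \<partial>PZ)"
    by (rule product_nn_integral_prod) auto
  also have "\<dots> = (\<integral>\<^sup>+z. ennreal (exp (u * (X z - m))) \<partial>PZ) ^ n" by simp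
  also have "\<dots> \<le> ennreal (exp (u\<^sup>2 * \<sigma>\<^sup>2 / 2)) ^ n"
    by (intro power_mono subg_exp_bound[OF PZ X sg, of u, folded m_def]) auto
  also have "\<dots> = ennreal (exp (lam\<^sup>2 * \<sigma>\<^sup>2 / (2 * real n)))"
  proof -
    have "ennreal (exp (u\<^sup>2 * \<sigma>\<^sup>2 / 2)) ^ n = ennreal (exp (u\<^sup>2 * \<sigma>\<^sup>2 / 2) ^ n)"
      by (simp add: ennreal_power)
    also have "exp (u\<^sup>2 * \<sigma>\<^sup>2 / 2) ^ n = exp (real n * (u\<^sup>2 * \<sigma>\<^sup>2 / 2))"
      by (subst exp_of_nat_mult) simp
    also have "real n * (u\<^sup>2 * \<sigma>\<^sup>2 / 2) = lam\<^sup>2 * \<sigma>\<^sup>2 / (2 * real n)"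
      using n by (simp add: u_def power2_eq_square field_simps)
    finally show ?thesis .
  qed
  finally show ?thesis unfolding m_def .
qed


abbreviation c0 :: chw where "c0 \<equiv> (mat 1, 0)"

lemma sets_train_dist: "sets \<rho> = sets MT \<Longrightarrow> sets (train_dist MT \<rho>) = sets (MT \<Otimes>\<^sub>M (borel :: chw measure))"
  unfolding train_dist_def by (intro sets_pair_measure_cong) auto

lemma space_train_dist: "sets \<rho> = sets MT \<Longrightarrow> space (train_dist MT \<rho>) = space MT \<times> (UNIV :: chw set)"
  using sets_eq_imp_space_eq[OF sets_train_dist] by (simp add: space_pair_measure)

lemma nn_integral_train_dist:
  assumes sets: "sets \<rho> = sets MT" and G[measurable]: "G \<in> borel_measurable (MT \<Otimes>\<^sub>M (borel :: chw measure))"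
  shows "(\<integral>\<^sup>+w. G w \<partial>train_dist MT \<rho>) = (\<integral>\<^sup>+t. G (t, c0) \<partial>\<rho>)"
proof -
  interpret R: prob_space "return borel c0 :: chw measure" by (rule prob_space_return) simp
  have Gm: "G \<in> borel_measurable (\<rho> \<Otimes>\<^sub>M return borel c0)"
    using G by (subst measurable_cong_sets[OF sets_pair_measure_cong[OF sets sets_return] refl]) auto
  have "(\<integral>\<^sup>+w. G w \<partial>train_dist MT \<rho>) = (\<integral>\<^sup>+x. \<integral>\<^sup>+y. G (x, y) \<partial>return borel c0 \<partial>\<rho>)"
    unfolding train_dist_def by (rule R.nn_integral_fst[OF Gm, symmetric])
  also have "\<dots> = (\<integral>\<^sup>+t. G (t, c0) \<partial>\<rho>)"
    by (intro nn_integral_cong nn_integral_return) (auto simp: sets_eq_imp_space_eq[OF sets])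
  finally show ?thesis .
qed

lemma kernel_measurable:
  assumes sets: "sets \<rho> = sets MT" and chan: "chan \<in> measurable borel (prob_algebra borel)"
  shows "(\<lambda>w. return MT (fst w) \<Otimes>\<^sub>M chan (snd w)) \<in> measurable (train_dist MT \<rho>) (subprob_algebra (MT \<Otimes>\<^sub>M (borel :: chw measure)))"
proof -
  have ch: "chan \<in> measurable borel (subprob_algebra borel)" using measurable_prob_algebraD[OF chan] .
  have "(\<lambda>w. return MT (fst w) \<Otimes>\<^sub>M chan (snd w)) \<in> measurable (MT \<Otimes>\<^sub>M (borel :: chw measure)) (subprob_algebra (MT \<Otimes>\<^sub>M (borel :: chw measure)))"
    by (intro measurable_pair_measure measurable_compose[OF measurable_fst return_measurable]
        measurable_compose[OF measurable_snd ch])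
  then show ?thesis by (subst measurable_cong_sets[OF sets_train_dist[OF sets] refl])
qed

lemma sets_deploy_dist:
  assumes sets: "sets \<rho> = sets MT" and chan: "chan \<in> measurable borel (prob_algebra borel)"
    and ne: "space MT \<noteq> {}"
  shows "sets (deploy_dist MT chan (train_dist MT \<rho>)) = sets (MT \<Otimes>\<^sub>M (borel :: chw measure))"
proof -
  have "sets (chan c) = sets borel" for c
    using measurable_space[OF chan, of c] by (simp add: space_prob_algebra)
  then show ?thesis
    unfolding deploy_dist_def using ne
    by (subst sets_bind[where N="MT \<Otimes>\<^sub>M borel"]) (auto simp: space_train_dist[OF sets] intro!: sets_pair_measure_cong)
qed

lemma nn_integral_deploy_dist:
  assumes sets: "sets \<rho> = sets MT" and chan: "chan \<in> measurable borel (prob_algebra borel)"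
    and G[measurable]: "G \<in> borel_measurable (MT \<Otimes>\<^sub>M (borel :: chw measure))"
  shows "(\<integral>\<^sup>+w. G w \<partial>deploy_dist MT chan (train_dist MT \<rho>)) = (\<integral>\<^sup>+t. \<integral>\<^sup>+c. G (t, c) \<partial>chan c0 \<partial>\<rho>)"
proof -
  define \<kappa> where "\<kappa> = (\<lambda>w::'a \<times> chw. return MT (fst w) \<Otimes>\<^sub>M chan (snd w))"
  have \<kappa>: "\<kappa> \<in> measurable (train_dist MT \<rho>) (subprob_algebra (MT \<Otimes>\<^sub>M (borel :: chw measure)))"
    unfolding \<kappa>_def by (rule kernel_measurable[OF sets chan])
  have \<kappa>': "\<kappa> \<in> measurable (MT \<Otimes>\<^sub>M (borel :: chw measure)) (subprob_algebra (MT \<Otimes>\<^sub>M (borel :: chw measure)))"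
    using \<kappa> by (subst (asm) measurable_cong_sets[OF sets_train_dist[OF sets] refl])
  have C: "chan c0 \<in> space (prob_algebra borel)" using measurable_space[OF chan, of c0] by simp
  interpret C: prob_space "chan c0" using C by (simp add: space_prob_algebra)
  have sC: "sets (chan c0) = sets borel" using C by (simp add: space_prob_algebra)
  have "(\<integral>\<^sup>+w. G w \<partial>deploy_dist MT chan (train_dist MT \<rho>)) = (\<integral>\<^sup>+w. \<integral>\<^sup>+y. G y \<partial>\<kappa> w \<partial>train_dist MT \<rho>)"
    unfolding deploy_dist_def \<kappa>_def[symmetric] by (rule nn_integral_bind[OF G \<kappa>])
  also have "\<dots> = (\<integral>\<^sup>+t. \<integral>\<^sup>+y. G y \<partial>\<kappa> (t, c0) \<partial>\<rho>)"
  proof (rule nn_integral_train_dist[OF sets])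
    show "(\<lambda>w. \<integral>\<^sup>+y. G y \<partial>\<kappa> w) \<in> borel_measurable (MT \<Otimes>\<^sub>M borel)"
      using measurable_compose[OF \<kappa>' nn_integral_measurable_subprob_algebra[OF G]] by simp
  qed
  also have "\<dots> = (\<integral>\<^sup>+t. \<integral>\<^sup>+c. G (t, c) \<partial>chan c0 \<partial>\<rho>)"
  proof (intro nn_integral_cong)
    fix t assume t: "t \<in> space \<rho>"
    then have tM: "t \<in> space MT" using sets_eq_imp_space_eq[OF sets] by simp
    have Gm: "G \<in> borel_measurable (return MT t \<Otimes>\<^sub>M chan c0)"
      using G by (subst measurable_cong_sets[OF sets_pair_measure_cong[OF sets_return sC] refl]) auto
    have Gm2: "(\<lambda>x. \<integral>\<^sup>+c. G (x, c) \<partial>chan c0) \<in> borel_measurable MT"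
    proof -
      have "G \<in> borel_measurable (MT \<Otimes>\<^sub>M chan c0)"
        using G by (subst measurable_cong_sets[OF sets_pair_measure_cong[OF refl sC] refl]) auto
      then show ?thesis by (rule C.borel_measurable_nn_integral_fst)
    qed
    have "(\<integral>\<^sup>+y. G y \<partial>\<kappa> (t, c0)) = (\<integral>\<^sup>+x. \<integral>\<^sup>+c. G (x, c) \<partial>chan c0 \<partial>return MT t)"
      unfolding \<kappa>_def by (simp add: C.nn_integral_fst[OF Gm])
    also have "\<dots> = (\<integral>\<^sup>+c. G (t, c) \<partial>chan c0)"
      by (rule nn_integral_return[OF tM Gm2])
    finally show "(\<integral>\<^sup>+y. G y \<partial>\<kappa> (t, c0)) = (\<integral>\<^sup>+c. G (t, c) \<partial>chan c0)" .
  qed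
  finally show ?thesis .
qed


lemma good_set:
  fixes \<Phi>p \<Phi>m :: "'s \<Rightarrow> ennreal"
  assumes \<Omega>: "prob_space \<Omega>" and [measurable]: "\<Phi>p \<in> borel_measurable \<Omega>" "\<Phi>m \<in> borel_measurable \<Omega>"
    and bp: "(\<integral>\<^sup>+S. \<Phi>p S \<partial>\<Omega>) \<le> ennreal B" and bm: "(\<integral>\<^sup>+S. \<Phi>m S \<partial>\<Omega>) \<le> ennreal B"
    and B: "B > 0" and \<epsilon>: "0 < \<epsilon>"
  shows "\<exists>A \<in> sets \<Omega>. measure \<Omega> A \<ge> 1 - \<epsilon> \<and> (\<forall>S\<in>A. \<Phi>p S \<le> ennreal (B / \<epsilon>) \<and> \<Phi>m S < \<infinity>)"
proof -
  interpret prob_space \<Omega> by (rule \<Omega>)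
  define A where "A = {S \<in> space \<Omega>. \<Phi>p S \<le> ennreal (B / \<epsilon>) \<and> \<Phi>m S < \<infinity>}"
  have A_sets: "A \<in> sets \<Omega>" unfolding A_def by measurable
  define E1 where "E1 = {S \<in> space \<Omega>. 1 \<le> ennreal (\<epsilon> / B) * \<Phi>p S}"
  define E2 where "E2 = \<Phi>m -` {\<infinity>} \<inter> space \<Omega>"
  have E1s: "E1 \<in> sets \<Omega>" unfolding E1_def by measurable
  have E2s: "E2 \<in> sets \<Omega>" unfolding E2_def by measurable
  have "emeasure \<Omega> E1 \<le> ennreal (\<epsilon> / B) * (\<integral>\<^sup>+S. \<Phi>p S * indicator (space \<Omega>) S \<partial>\<Omega>)"
    unfolding E1_def by (rule nn_integral_Markov_inequality) auto
  also have "(\<integral>\<^sup>+S. \<Phi>p S * indicator (space \<Omega>) S \<partial>\<Omega>) = (\<integral>\<^sup>+S. \<Phi>p S \<partial>\<Omega>)"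
    by (intro nn_integral_cong) (auto split: split_indicator)
  also have "ennreal (\<epsilon> / B) * (\<integral>\<^sup>+S. \<Phi>p S \<partial>\<Omega>) \<le> ennreal (\<epsilon> / B) * ennreal B"
    by (intro mult_left_mono bp) auto
  also have "\<dots> = ennreal \<epsilon>" using B \<epsilon> by (simp add: ennreal_mult[symmetric])
  finally have e1: "emeasure \<Omega> E1 \<le> ennreal \<epsilon>" .
  have "(\<integral>\<^sup>+S. \<Phi>m S \<partial>\<Omega>) \<noteq> \<infinity>" using bm by (auto simp: top_unique)
  then have e2: "emeasure \<Omega> E2 = 0" unfolding E2_def by (intro nn_integral_PInf) auto
  have sub: "space \<Omega> - A \<subseteq> E1 \<union> E2"
  proof
    fix S assume S: "S \<in> space \<Omega> - A"
    show "S \<in> E1 \<union> E2"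
    proof (cases "\<Phi>m S = \<infinity>")
      case True then show ?thesis using S by (auto simp: E2_def)
    next
      case False
      then have "\<not> \<Phi>p S \<le> ennreal (B / \<epsilon>)" using S by (auto simp: A_def top.not_eq_extremum)
      then have lt: "ennreal (B / \<epsilon>) < \<Phi>p S" by simp
      have "1 \<le> ennreal (\<epsilon> / B) * \<Phi>p S"
      proof -
        have "ennreal (\<epsilon> / B) * ennreal (B / \<epsilon>) \<le> ennreal (\<epsilon> / B) * \<Phi>p S"
          using lt by (intro mult_left_mono) auto
        moreover have "ennreal (\<epsilon> / B) * ennreal (B / \<epsilon>) = 1"
          using B \<epsilon> by (simp add: ennreal_mult[symmetric])
        ultimately show ?thesis by simp
      qed
      then show ?thesis using S by (auto simp: E1_def)
    qed
  qed
  have "emeasure \<Omega> (space \<Omega> - A) \<le> emeasure \<Omega> (E1 \<union> E2)"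
    by (intro emeasure_mono sub) (use E1s E2s in auto)
  also have "\<dots> \<le> emeasure \<Omega> E1 + emeasure \<Omega> E2" by (rule emeasure_subadditive[OF E1s E2s])
  also have "\<dots> \<le> ennreal \<epsilon>" using e1 e2 by simp
  finally have "measure \<Omega> (space \<Omega> - A) \<le> \<epsilon>"
    using \<epsilon> by (simp add: emeasure_eq_measure)
  then have "measure \<Omega> A \<ge> 1 - \<epsilon>" using prob_compl[OF A_sets] by simp
  then show ?thesis using A_sets unfolding A_def by blast
qed


theorem mainTheorem5:
  fixes MT :: "'t measure"           \<comment> \<open>measurable space of learnable weights\<close>
    and dt :: "'t \<Rightarrow> 't \<Rightarrow> real"    \<comment> \<open>metric on learnable weights (sum of the layer metrics)\<close>
    and PZ :: "'z measure"           \<comment> \<open>data distribution\<close>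
    and n :: nat
    and alg :: "(nat \<Rightarrow> 'z) \<Rightarrow> 't measure"  \<comment> \<open>learning algorithm P_{W~|S}\<close>
    and loss :: "('t \<times> chw) \<Rightarrow> 'z \<Rightarrow> real"
    and \<sigma> K :: real
    and M :: "'a measure" and H0 N0 :: "'a \<Rightarrow> complex"
    and P \<sigma>0 :: real
    and chan :: "chw \<Rightarrow> chw measure"  \<comment> \<open>channel kernel\<close>
  assumes PZ: "prob_space PZ"
    and n: "n > 0"
    and alg: "alg \<in> measurable (PiM {..<n} (\<lambda>_. PZ)) (prob_algebra MT)"
    and dt: "is_metric_on (space MT) dt"
    and loss_meas: "(\<lambda>(w, z). loss w z) \<in> borel_measurable ((MT \<Otimes>\<^sub>M borel) \<Otimes>\<^sub>M PZ)"
    and loss_nonneg: "\<And>w z. loss w z \<ge> 0"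
    and subg: "\<And>w. w \<in> space MT \<times> UNIV \<Longrightarrow> sub_gaussian PZ (loss w) \<sigma>"
    and lip: "\<And>w w' z. w \<in> space MT \<times> UNIV \<Longrightarrow> w' \<in> space MT \<times> UNIV \<Longrightarrow> z \<in> space PZ \<Longrightarrow>
               \<bar>loss w z - loss w' z\<bar> \<le> K * d_W dt w w'"
    and M: "prob_space M"
    and H0_meas: "H0 \<in> borel_measurable M" and N0_meas: "N0 \<in> borel_measurable M"
    and H0_dist: "distr M borel H0 = cgauss 1"
    and N0_dist: "distr M borel N0 = cgauss \<sigma>0"
    and indep: "prob_space.indep_var M borel H0 borel N0"
    and P: "P > 0" and \<sigma>0: "\<sigma>0 > 0"
    and chan_kernel: "chan \<in> measurable borel (prob_algebra borel)"
    and chan_I0: "chan (mat 1, 0) =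
          distr M borel (\<lambda>\<omega>. (mat 1, re_im (N0 \<omega> / (complex_of_real (sqrt P) * H0 \<omega>))))"
  shows
    "(let \<gamma> = P / \<sigma>0\<^sup>2 in
       (\<integral>w'. d_ch w' (mat 1, 0) \<partial>chan (mat 1, 0)) = pi / (2 * sqrt \<gamma>) \<and>
       (\<forall>Q. sets Q = sets MT \<longrightarrow> prob_space Q \<longrightarrow>
         (\<forall>k>0. \<forall>\<epsilon>. 0 < \<epsilon> \<and> \<epsilon> < 1 \<longrightarrow>
           (\<exists>A \<in> sets (PiM {..<n} (\<lambda>_. PZ)).
              measure (PiM {..<n} (\<lambda>_. PZ)) A \<ge> 1 - \<epsilon> \<and>
              (\<forall>S\<in>A.
                 let PW = train_dist MT (alg S);
                     PW' = deploy_dist MT chan PW;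
                     \<Delta> = (\<integral>w. pop_risk PZ loss w \<partial>PW') - (\<integral>w. emp_risk n loss w S \<partial>PW)
                 in ereal \<Delta> \<le> ereal (k * \<sigma>\<^sup>2 / (2 * real n))
                       + (kl_div (alg S) Q - ereal (ln \<epsilon>)) / ereal k
                       + ereal (pi * K / (2 * sqrt \<gamma>)))))))"
  proof -
  interpret PZ: prob_space PZ by (rule PZ)
  define \<gamma> where "\<gamma> = P / \<sigma>0\<^sup>2"
  define \<Omega> where "\<Omega> = pi / (2 * sqrt \<gamma>)"
  define C where "C = chan c0"
  have \<Omega>_nn: "\<Omega> \<ge> 0" unfolding \<Omega>_def \<gamma>_def using P \<sigma>0 by simp
  have C_space: "C \<in> space (prob_algebra borel)" unfolding C_def using measurable_space[OF chan_kernel, of c0] by simp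
  interpret C: prob_space C using C_space by (simp add: space_prob_algebra)
  have sC: "sets C = sets borel" using C_space by (simp add: space_prob_algebra)
  have pen_nn: "(\<integral>\<^sup>+w'. ennreal (d_ch w' c0) \<partial>C) = ennreal \<Omega>"
    unfolding \<Omega>_def \<gamma>_def
    by (rule channel_penalty_nn[OF M H0_meas N0_meas H0_dist N0_dist indep P \<sigma>0]) (simp add: C_def chan_I0)
  have d_nn: "0 \<le> d_ch w c" for w c
    unfolding d_ch_def by (intro add_nonneg_nonneg onorm_pos_le) auto
  have d_meas: "(\<lambda>w'. d_ch w' c0) \<in> borel_measurable C"
    by (subst measurable_cong_sets[OF sC refl]) simp
  have int_d: "integrable C (\<lambda>w'. d_ch w' c0)"
    using pen_nn d_nn d_meas by (intro integrableI_nonneg) auto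
  have pen: "(\<integral>w'. d_ch w' c0 \<partial>C) = \<Omega>"
    using pen_nn d_nn d_meas \<Omega>_nn by (subst integral_eq_nn_integral) auto
  have part2: "\<forall>Q. sets Q = sets MT \<longrightarrow> prob_space Q \<longrightarrow>
         (\<forall>k>0. \<forall>\<epsilon>. 0 < \<epsilon> \<and> \<epsilon> < 1 \<longrightarrow>
           (\<exists>A \<in> sets (PiM {..<n} (\<lambda>_. PZ)).
              measure (PiM {..<n} (\<lambda>_. PZ)) A \<ge> 1 - \<epsilon> \<and>
              (\<forall>S\<in>A.
                 let PW = train_dist MT (alg S);
                     PW' = deploy_dist MT chan PW;
                     \<Delta> = (\<integral>w. pop_risk PZ loss w \<partial>PW') - (\<integral>w. emp_risk n loss w S \<partial>PW)
                 in ereal \<Delta> \<le> ereal (k * \<sigma>\<^sup>2 / (2 * real n))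
                       + (kl_div (alg S) Q - ereal (ln \<epsilon>)) / ereal k
                       + ereal (pi * K / (2 * sqrt \<gamma>)))))"
proof (intro allI impI)
    fix Q :: "'t measure" and k \<epsilon> :: real
    assume sQ: "sets Q = sets MT" and Qp: "prob_space Q" and k: "k > 0" and \<epsilon>: "0 < \<epsilon> \<and> \<epsilon> < 1"
    interpret Q: prob_space Q by (rule Qp)
    define PP where "PP = PiM {..<n} (\<lambda>_. PZ)"
    interpret PP: prob_space PP unfolding PP_def by (intro prob_space_PiM PZ)
    interpret QP: pair_prob_space Q PP by (intro pair_prob_space.intro pair_sigma_finite.intro Qp PP.prob_space_axioms prob_space_imp_sigma_finite)
    define Lt where "Lt t = pop_risk PZ loss (t, c0)" for t
    define Lh where "Lh t S = emp_risk n loss (t, c0) S" for t S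
    define B where "B = exp (k\<^sup>2 * \<sigma>\<^sup>2 / (2 * real n))"
    have B_pos: "B > 0" unfolding B_def by simp
    have lossm: "(\<lambda>p. loss (fst p) (snd p)) \<in> borel_measurable ((MT \<Otimes>\<^sub>M borel) \<Otimes>\<^sub>M PZ)"
      using loss_meas by (simp add: case_prod_unfold)
    have Lc_meas: "(\<lambda>w. pop_risk PZ loss w) \<in> borel_measurable (MT \<Otimes>\<^sub>M borel)"
      unfolding pop_risk_def by (rule PZ.borel_measurable_lebesgue_integral) (use loss_meas in simp)
    have Lt_meas: "Lt \<in> borel_measurable MT"
      unfolding Lt_def by (rule measurable_compose[OF _ Lc_meas]) simp
    have term_meas1: "(\<lambda>p. loss (fst p, c0) (snd p i)) \<in> borel_measurable (MT \<Otimes>\<^sub>M PP)" if "i < n" for i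
    proof -
      have "(\<lambda>p. ((fst p, c0), snd p i)) \<in> MT \<Otimes>\<^sub>M PP \<rightarrow>\<^sub>M (MT \<Otimes>\<^sub>M borel) \<Otimes>\<^sub>M PZ"
        unfolding PP_def by measurable (simp add: that)
      from measurable_compose[OF this lossm] show ?thesis by simp
    qed
    have term_meas2: "(\<lambda>p. loss (snd p, c0) (fst p i)) \<in> borel_measurable (PP \<Otimes>\<^sub>M MT)" if "i < n" for i
    proof -
      have "(\<lambda>p. ((snd p, c0), fst p i)) \<in> PP \<Otimes>\<^sub>M MT \<rightarrow>\<^sub>M (MT \<Otimes>\<^sub>M borel) \<Otimes>\<^sub>M PZ"
        unfolding PP_def by measurable (simp add: that)
      from measurable_compose[OF this lossm] show ?thesis by simp
    qed
    have Lh_meas1: "(\<lambda>p. Lh (fst p) (snd p)) \<in> borel_measurable (MT \<Otimes>\<^sub>M PP)"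
      unfolding Lh_def emp_risk_def using term_meas1 by (intro borel_measurable_times borel_measurable_sum) auto
    have Lh_meas2: "(\<lambda>p. Lh (snd p) (fst p)) \<in> borel_measurable (PP \<Otimes>\<^sub>M MT)"
      unfolding Lh_def emp_risk_def using term_meas2 by (intro borel_measurable_times borel_measurable_sum) auto
    define \<Phi> where "\<Phi> k' S = (\<integral>\<^sup>+t. ennreal (exp (k' * (Lt t - Lh t S))) \<partial>Q)" for k' S
    have \<Phi>_meas: "\<Phi> k' \<in> borel_measurable PP" for k'
    proof -
      have "(\<lambda>p. Lt (snd p)) \<in> borel_measurable (PP \<Otimes>\<^sub>M MT)"
        by (rule measurable_compose[OF measurable_snd Lt_meas])
      note [measurable] = this Lh_meas2
      have "(\<lambda>p. ennreal (exp (k' * (Lt (snd p) - Lh (snd p) (fst p))))) \<in> borel_measurable (PP \<Otimes>\<^sub>M MT)"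
        by measurable
      then have "(\<lambda>p. ennreal (exp (k' * (Lt (snd p) - Lh (snd p) (fst p))))) \<in> borel_measurable (PP \<Otimes>\<^sub>M Q)"
        by (subst measurable_cong_sets[OF sets_pair_measure_cong[OF refl sQ] refl])
      from Q.borel_measurable_nn_integral_fst[OF this] show ?thesis unfolding \<Phi>_def by simp
    qed
    have \<Phi>_int: "(\<integral>\<^sup>+S. \<Phi> k' S \<partial>PP) \<le> ennreal B" if kk: "k'\<^sup>2 = k\<^sup>2" for k'
    proof -
      have "(\<lambda>p. Lt (fst p)) \<in> borel_measurable (MT \<Otimes>\<^sub>M PP)"
        by (rule measurable_compose[OF measurable_fst Lt_meas])
      note [measurable] = this Lh_meas1
      have "(\<lambda>p. ennreal (exp (k' * (Lt (fst p) - Lh (fst p) (snd p))))) \<in> borel_measurable (MT \<Otimes>\<^sub>M PP)"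
        by measurable
      then have jm: "case_prod (\<lambda>t S. ennreal (exp (k' * (Lt t - Lh t S)))) \<in> borel_measurable (Q \<Otimes>\<^sub>M PP)"
        by (subst measurable_cong_sets[OF sets_pair_measure_cong[OF sQ refl] refl]) (simp add: case_prod_unfold)
      have "(\<integral>\<^sup>+S. \<Phi> k' S \<partial>PP) = (\<integral>\<^sup>+t. \<integral>\<^sup>+S. ennreal (exp (k' * (Lt t - Lh t S))) \<partial>PP \<partial>Q)"
        unfolding \<Phi>_def by (rule QP.Fubini'[OF jm])
      also have "\<dots> \<le> (\<integral>\<^sup>+t. ennreal B \<partial>Q)"
      proof (intro nn_integral_mono)
        fix t assume "t \<in> space Q"
        then have tM: "t \<in> space MT" using sets_eq_imp_space_eq[OF sQ] by simp
        have Xm: "loss (t, c0) \<in> borel_measurable PZ"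
        proof -
          have "(\<lambda>z. ((t, c0), z)) \<in> PZ \<rightarrow>\<^sub>M (MT \<Otimes>\<^sub>M borel) \<Otimes>\<^sub>M PZ" using tM by measurable
          from measurable_compose[OF this lossm] show ?thesis by simp
        qed
        have sg: "sub_gaussian PZ (loss (t, c0)) \<sigma>" using subg tM by simp
        show "(\<integral>\<^sup>+S. ennreal (exp (k' * (Lt t - Lh t S))) \<partial>PP) \<le> ennreal B"
          using subg_mean_bound[OF PZ n Xm sg, of k'] kk
          unfolding PP_def Lt_def Lh_def pop_risk_def emp_risk_def B_def by simp
      qed
      also have "\<dots> = ennreal B" by (simp add: Q.emeasure_space_1)
      finally show ?thesis .
    qed
    obtain A where A: "A \<in> sets PP" "measure PP A \<ge> 1 - \<epsilon>"
      and A2: "\<forall>S\<in>A. \<Phi> k S \<le> ennreal (B / \<epsilon>) \<and> \<Phi> (-k) S < \<infinity>"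
      using good_set[OF PP.prob_space_axioms \<Phi>_meas \<Phi>_meas \<Phi>_int[of k] \<Phi>_int[of "-k"] B_pos, of \<epsilon>] \<epsilon> by auto
    show "\<exists>A \<in> sets (PiM {..<n} (\<lambda>_. PZ)).
              measure (PiM {..<n} (\<lambda>_. PZ)) A \<ge> 1 - \<epsilon> \<and>
              (\<forall>S\<in>A.
                 let PW = train_dist MT (alg S);
                     PW' = deploy_dist MT chan PW;
                     \<Delta> = (\<integral>w. pop_risk PZ loss w \<partial>PW') - (\<integral>w. emp_risk n loss w S \<partial>PW)
                 in ereal \<Delta> \<le> ereal (k * \<sigma>\<^sup>2 / (2 * real n))
                       + (kl_div (alg S) Q - ereal (ln \<epsilon>)) / ereal k
                       + ereal (pi * K / (2 * sqrt \<gamma>)))"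
    proof (intro bexI[of _ A] conjI ballI)
      show "A \<in> sets (PiM {..<n} (\<lambda>_. PZ))" using A unfolding PP_def by simp
      show "measure (PiM {..<n} (\<lambda>_. PZ)) A \<ge> 1 - \<epsilon>" using A unfolding PP_def by simp
      fix S assume SA: "S \<in> A"
      show "let PW = train_dist MT (alg S);
                     PW' = deploy_dist MT chan PW;
                     \<Delta> = (\<integral>w. pop_risk PZ loss w \<partial>PW') - (\<integral>w. emp_risk n loss w S \<partial>PW)
                 in ereal \<Delta> \<le> ereal (k * \<sigma>\<^sup>2 / (2 * real n))
                       + (kl_div (alg S) Q - ereal (ln \<epsilon>)) / ereal k
                       + ereal (pi * K / (2 * sqrt \<gamma>))"
      proof -
        have S_sp: "S \<in> space PP" using A(1) SA sets.sets_into_space by auto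
        define \<rho> where "\<rho> = alg S"
        have \<rho>_sp: "\<rho> \<in> space (prob_algebra MT)"
          using measurable_space[OF alg, of S] S_sp unfolding \<rho>_def PP_def by simp
        have s\<rho>: "sets \<rho> = sets MT" and \<rho>p: "prob_space \<rho>" using \<rho>_sp by (auto simp: space_prob_algebra)
        interpret \<rho>: prob_space \<rho> by (rule \<rho>p)
        have sp\<rho>: "space \<rho> = space MT" using sets_eq_imp_space_eq[OF s\<rho>] .
        have neMT: "space MT \<noteq> {}" using \<rho>.not_empty sp\<rho> by simp
        have s\<rho>Q: "sets \<rho> = sets Q" using s\<rho> sQ by simp
        have meq\<rho>: "borel_measurable \<rho> = borel_measurable MT" by (rule measurable_cong_sets[OF s\<rho> refl])
        have meqQ: "borel_measurable Q = borel_measurable MT" by (rule measurable_cong_sets[OF sQ refl])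
        define PW where "PW = train_dist MT \<rho>"
        define PW' where "PW' = deploy_dist MT chan PW"
        have pr_nn: "0 \<le> pop_risk PZ loss w" for w
          unfolding pop_risk_def by (intro integral_nonneg_AE) (simp add: loss_nonneg)
        have er_nn: "0 \<le> emp_risk n loss w S'" for w S'
          unfolding emp_risk_def by (intro mult_nonneg_nonneg sum_nonneg) (auto simp: loss_nonneg)
        have Si: "S i \<in> space PZ" if "i < n" for i
          using S_sp that unfolding PP_def by (auto simp: space_PiM)
        have er_meas: "(\<lambda>w. emp_risk n loss w S) \<in> borel_measurable (MT \<Otimes>\<^sub>M borel)"
        proof -
          have "(\<lambda>w. loss w (S i)) \<in> borel_measurable (MT \<Otimes>\<^sub>M borel)" if "i < n" for i
          proof -
            have "(\<lambda>w. (w, S i)) \<in> (MT \<Otimes>\<^sub>M borel) \<rightarrow>\<^sub>M (MT \<Otimes>\<^sub>M borel) \<Otimes>\<^sub>M PZ"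
              using Si[OF that] by measurable
            from measurable_compose[OF this lossm] show ?thesis by simp
          qed
          then show ?thesis unfolding emp_risk_def by (intro borel_measurable_times borel_measurable_sum) auto
        qed
        have Lh_meas: "(\<lambda>t. Lh t S) \<in> borel_measurable MT"
          unfolding Lh_def by (rule measurable_compose[OF _ er_meas]) simp
        have Lt_nn: "0 \<le> Lt t" for t unfolding Lt_def by (rule pr_nn)
        have Lh_nn: "0 \<le> Lh t S" for t unfolding Lh_def by (rule er_nn)
        define a where "a = (\<integral>\<^sup>+t. ennreal (Lt t) \<partial>\<rho>)"
        define b where "b = (\<integral>\<^sup>+t. ennreal (Lh t S) \<partial>\<rho>)"
        define a' where "a' = (\<integral>\<^sup>+t. \<integral>\<^sup>+c. ennreal (pop_risk PZ loss (t, c)) \<partial>C \<partial>\<rho>)"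
        have I1: "(\<integral>w. emp_risk n loss w S \<partial>PW) = enn2real b"
        proof -
          have m: "(\<lambda>w. emp_risk n loss w S) \<in> borel_measurable PW"
            unfolding PW_def by (subst measurable_cong_sets[OF sets_train_dist[OF s\<rho>] refl]) (rule er_meas)
          have "(\<integral>w. emp_risk n loss w S \<partial>PW) = enn2real (\<integral>\<^sup>+w. ennreal (emp_risk n loss w S) \<partial>PW)"
            using m er_nn by (intro integral_eq_nn_integral) auto
          also have "(\<integral>\<^sup>+w. ennreal (emp_risk n loss w S) \<partial>PW) = b"
            unfolding PW_def b_def Lh_def using er_meas by (subst nn_integral_train_dist[OF s\<rho>]) auto
          finally show ?thesis .
        qed
        have I2: "(\<integral>w. pop_risk PZ loss w \<partial>PW') = enn2real a'"
        proof -
          have m: "(\<lambda>w. pop_risk PZ loss w) \<in> borel_measurable PW'"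
            unfolding PW'_def PW_def
            by (subst measurable_cong_sets[OF sets_deploy_dist[OF s\<rho> chan_kernel neMT] refl]) (rule Lc_meas)
          have "(\<integral>w. pop_risk PZ loss w \<partial>PW') = enn2real (\<integral>\<^sup>+w. ennreal (pop_risk PZ loss w) \<partial>PW')"
            using m pr_nn by (intro integral_eq_nn_integral) auto
          also have "(\<integral>\<^sup>+w. ennreal (pop_risk PZ loss w) \<partial>PW') = a'"
            unfolding PW'_def PW_def a'_def C_def using Lc_meas
            by (subst nn_integral_deploy_dist[OF s\<rho> chan_kernel]) auto
          finally show ?thesis .
        qed
        have dW: "d_W dt (t, c) (t, c0) = d_ch c c0" if "t \<in> space MT" for t c
          using dt that unfolding is_metric_on_def d_W_def by auto
        obtain z0 where z0: "z0 \<in> space PZ" using PZ.not_empty by auto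
        obtain t0 where t0: "t0 \<in> space MT" using neMT by auto
        have K_nn: "K \<ge> 0"
        proof -
          have "\<bar>loss (t0, (mat 1, re_im 1)) z0 - loss (t0, c0) z0\<bar> \<le> K * d_W dt (t0, (mat 1, re_im 1)) (t0, c0)"
            using lip t0 z0 by auto
          also have "\<dots> = K" using dW[OF t0] by (simp add: d_ch_I0 norm_re_im)
          finally show ?thesis by (meson abs_ge_zero order_trans)
        qed
        have lipL: "\<bar>pop_risk PZ loss (t, c) - Lt t\<bar> \<le> K * d_ch c c0" if tM: "t \<in> space MT" for t c
        proof -
          have i1: "integrable PZ (loss (t, c))" using subg[of "(t, c)"] tM by (simp add: sub_gaussian_def)
          have i2: "integrable PZ (loss (t, c0))" using subg[of "(t, c0)"] tM by (simp add: sub_gaussian_def)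
          have "\<bar>pop_risk PZ loss (t, c) - Lt t\<bar> = \<bar>\<integral>z. loss (t, c) z - loss (t, c0) z \<partial>PZ\<bar>"
            unfolding Lt_def pop_risk_def using i1 i2 by simp
          also have "\<dots> \<le> (\<integral>z. \<bar>loss (t, c) z - loss (t, c0) z\<bar> \<partial>PZ)"
            by (rule integral_abs_bound)
          also have "\<dots> \<le> (\<integral>z. K * d_ch c c0 \<partial>PZ)"
          proof (rule integral_mono)
            show "integrable PZ (\<lambda>z. \<bar>loss (t, c) z - loss (t, c0) z\<bar>)" using i1 i2 by simp
            show "integrable PZ (\<lambda>z. K * d_ch c c0)" by simp
            fix z assume "z \<in> space PZ"
            then show "\<bar>loss (t, c) z - loss (t, c0) z\<bar> \<le> K * d_ch c c0"
              using lip[of "(t, c)" "(t, c0)" z] tM dW[OF tM] by simp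
          qed
          also have "\<dots> = K * d_ch c c0" by (simp add: PZ.prob_space)
          finally show ?thesis .
        qed
        have inner_le: "(\<integral>\<^sup>+c. ennreal (pop_risk PZ loss (t, c)) \<partial>C) \<le> ennreal (Lt t) + ennreal K * ennreal \<Omega>"
          if tM: "t \<in> space MT" for t
        proof -
          have "(\<integral>\<^sup>+c. ennreal (pop_risk PZ loss (t, c)) \<partial>C) \<le> (\<integral>\<^sup>+c. ennreal (Lt t) + ennreal K * ennreal (d_ch c c0) \<partial>C)"
          proof (intro nn_integral_mono)
            fix c
            have "pop_risk PZ loss (t, c) \<le> Lt t + K * d_ch c c0" using lipL[OF tM, of c] by simp
            then show "ennreal (pop_risk PZ loss (t, c)) \<le> ennreal (Lt t) + ennreal K * ennreal (d_ch c c0)"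
              using K_nn d_nn Lt_nn by (simp add: ennreal_plus[symmetric] ennreal_mult[symmetric] del: ennreal_plus)
          qed
          also have "\<dots> = ennreal (Lt t) + ennreal K * ennreal \<Omega>"
            using d_meas by (simp add: nn_integral_add nn_integral_cmult C.emeasure_space_1 pen_nn)
          finally show ?thesis .
        qed
        have inner_ge: "ennreal (Lt t) \<le> (\<integral>\<^sup>+c. ennreal (pop_risk PZ loss (t, c)) \<partial>C) + ennreal K * ennreal \<Omega>"
          if tM: "t \<in> space MT" for t
        proof -
          have "ennreal (Lt t) = (\<integral>\<^sup>+c. ennreal (Lt t) \<partial>C)" by (simp add: C.emeasure_space_1)
          also have "\<dots> \<le> (\<integral>\<^sup>+c. ennreal (pop_risk PZ loss (t, c)) + ennreal K * ennreal (d_ch c c0) \<partial>C)"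
          proof (intro nn_integral_mono)
            fix c
            have "Lt t \<le> pop_risk PZ loss (t, c) + K * d_ch c c0" using lipL[OF tM, of c] by simp
            then show "ennreal (Lt t) \<le> ennreal (pop_risk PZ loss (t, c)) + ennreal K * ennreal (d_ch c c0)"
              using K_nn d_nn pr_nn by (simp add: ennreal_plus[symmetric] ennreal_mult[symmetric] del: ennreal_plus)
          qed
          also have "\<dots> = (\<integral>\<^sup>+c. ennreal (pop_risk PZ loss (t, c)) \<partial>C) + ennreal K * ennreal \<Omega>"
          proof -
            have "(\<lambda>c. pop_risk PZ loss (t, c)) \<in> borel_measurable C"
              using measurable_compose[OF _ Lc_meas, of "\<lambda>c. (t, c)"] tM
              by (subst measurable_cong_sets[OF sC refl]) simp
            then show ?thesis using d_meas by (simp add: nn_integral_add nn_integral_cmult pen_nn)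
          qed
          finally show ?thesis .
        qed
        have a'_le: "a' \<le> a + ennreal K * ennreal \<Omega>"
        proof -
          have "a' \<le> (\<integral>\<^sup>+t. ennreal (Lt t) + ennreal K * ennreal \<Omega> \<partial>\<rho>)"
            unfolding a'_def by (intro nn_integral_mono inner_le) (simp add: sp\<rho>)
          also have "\<dots> = a + ennreal K * ennreal \<Omega>"
            unfolding a_def using Lt_meas by (subst nn_integral_add) (auto simp: meq\<rho> \<rho>.emeasure_space_1)
          finally show ?thesis .
        qed
        have a_le: "a \<le> a' + ennreal K * ennreal \<Omega>"
        proof -
          have "a \<le> (\<integral>\<^sup>+t. (\<integral>\<^sup>+c. ennreal (pop_risk PZ loss (t, c)) \<partial>C) + ennreal K * ennreal \<Omega> \<partial>\<rho>)"
            unfolding a_def by (intro nn_integral_mono inner_ge) (simp add: sp\<rho>)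
          also have "\<dots> = a' + ennreal K * ennreal \<Omega>"
          proof -
            have "(\<lambda>t. \<integral>\<^sup>+c. ennreal (pop_risk PZ loss (t, c)) \<partial>C) \<in> borel_measurable MT"
            proof -
              have "(\<lambda>w. ennreal (pop_risk PZ loss w)) \<in> borel_measurable (MT \<Otimes>\<^sub>M C)"
                using Lc_meas by (subst measurable_cong_sets[OF sets_pair_measure_cong[OF refl sC] refl]) simp
              from C.borel_measurable_nn_integral_fst[OF this] show ?thesis by simp
            qed
            then show ?thesis unfolding a'_def by (subst nn_integral_add) (auto simp: meq\<rho> \<rho>.emeasure_space_1)
          qed
          finally show ?thesis .
        qed
        define f where "f t = k * (Lt t - Lh t S)" for t
        have f_meas: "f \<in> borel_measurable MT" unfolding f_def using Lt_meas Lh_meas by measurable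
        have main: "ereal (enn2real a' - enn2real b) \<le> ereal (k * \<sigma>\<^sup>2 / (2 * real n))
                       + (kl_div \<rho> Q - ereal (ln \<epsilon>)) / ereal k + ereal (pi * K / (2 * sqrt \<gamma>))"
        proof (cases "absolutely_continuous Q \<rho> \<and> integrable \<rho> (entropy_density (exp 1) Q \<rho>)")
          case False
          then have "kl_div \<rho> Q = \<infinity>" unfolding kl_div_def by auto
          then show ?thesis using k by simp
        next
          case True
          then have ac: "absolutely_continuous Q \<rho>" and intg: "integrable \<rho> (entropy_density (exp 1) Q \<rho>)" by auto
          define D where "D = KL_divergence (exp 1) Q \<rho>"
          have kl: "kl_div \<rho> Q = ereal D" unfolding kl_div_def D_def using True by simp
          have fQ: "f \<in> borel_measurable Q" unfolding meqQ by (rule f_meas)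
          have fm\<rho>: "f \<in> borel_measurable \<rho>" unfolding meq\<rho> by (rule f_meas)
          have SA2: "\<Phi> k S \<le> ennreal (B / \<epsilon>)" "\<Phi> (-k) S < \<infinity>" using A2 SA by auto
          obtain h1 where h1: "integrable \<rho> h1" "AE t in \<rho>. f t \<le> h1 t" "(\<integral>t. h1 t \<partial>\<rho>) \<le> D + ln (B / \<epsilon>)"
            using DV_bound[OF Qp \<rho>p s\<rho>Q ac intg fQ, of "B / \<epsilon>"] SA2(1) unfolding \<Phi>_def f_def D_def by auto
          have fQ2: "(\<lambda>t. - f t) \<in> borel_measurable Q" using fQ by measurable
          obtain h2 where h2: "integrable \<rho> h2" "AE t in \<rho>. - f t \<le> h2 t"
          proof -
            have "(\<integral>\<^sup>+t. ennreal (exp (- f t)) \<partial>Q) \<le> ennreal (enn2real (\<Phi> (-k) S))"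
              using SA2(2) unfolding \<Phi>_def f_def by (simp add: less_top)
            from DV_bound[OF Qp \<rho>p s\<rho>Q ac intg fQ2 this] that show ?thesis by auto
          qed
          obtain h0 where h0: "integrable \<rho> h0" "AE t in \<rho>. 0 \<le> h0 t" "(\<integral>t. h0 t \<partial>\<rho>) \<le> D + ln 1"
          proof -
            have "(\<integral>\<^sup>+t. ennreal (exp ((\<lambda>_. 0::real) t)) \<partial>Q) \<le> ennreal 1"
              by (simp add: Q.emeasure_space_1)
            from DV_bound[OF Qp \<rho>p s\<rho>Q ac intg _ this] that show ?thesis unfolding D_def by auto
          qed
          have D_nn: "0 \<le> D"
          proof -
            have "0 \<le> (\<integral>t. h0 t \<partial>\<rho>)" using h0(2) by (rule integral_nonneg_AE)
            then show ?thesis using h0(3) by simp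
          qed
          have f_int: "integrable \<rho> f"
          proof (rule Bochner_Integration.integrable_bound[of \<rho> "\<lambda>t. \<bar>h1 t\<bar> + \<bar>h2 t\<bar>"])
            show "integrable \<rho> (\<lambda>t. \<bar>h1 t\<bar> + \<bar>h2 t\<bar>)" using h1(1) h2(1) by auto
            show "f \<in> borel_measurable \<rho>" by (rule fm\<rho>)
            show "AE t in \<rho>. norm (f t) \<le> norm (\<bar>h1 t\<bar> + \<bar>h2 t\<bar>)"
              using h1(2) h2(2) by eventually_elim auto
          qed
          have f_bound: "(\<integral>t. f t \<partial>\<rho>) \<le> D + k\<^sup>2 * \<sigma>\<^sup>2 / (2 * real n) - ln \<epsilon>"
          proof -
            have 1: "(\<integral>t. f t \<partial>\<rho>) \<le> (\<integral>t. h1 t \<partial>\<rho>)" using f_int h1(1) h1(2) by (rule integral_mono_AE)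
            have 2: "ln (B / \<epsilon>) = k\<^sup>2 * \<sigma>\<^sup>2 / (2 * real n) - ln \<epsilon>"
              using \<epsilon> B_pos by (simp add: ln_div B_def)
            show ?thesis using 1 2 h1(3) by linarith
          qed
          have K\<Omega>: "pi * K / (2 * sqrt \<gamma>) = K * \<Omega>" unfolding \<Omega>_def by simp
          have rhs: "ereal (k * \<sigma>\<^sup>2 / (2 * real n)) + (kl_div \<rho> Q - ereal (ln \<epsilon>)) / ereal k + ereal (pi * K / (2 * sqrt \<gamma>))
              = ereal (k * \<sigma>\<^sup>2 / (2 * real n) + (D - ln \<epsilon>) / k + K * \<Omega>)"
            using k unfolding kl K\<Omega> by simp
          have lnneg: "ln \<epsilon> < 0" using \<epsilon> by simp
          show ?thesis
          proof (cases "integrable \<rho> Lt")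
            case True
            have Lh_int: "integrable \<rho> (\<lambda>t. Lh t S)"
            proof -
              have "(\<lambda>t. Lh t S) = (\<lambda>t. Lt t - f t / k)" using k by (auto simp: f_def fun_eq_iff)
              then show ?thesis using True f_int by simp
            qed
            have a_eq: "a = ennreal (\<integral>t. Lt t \<partial>\<rho>)"
              unfolding a_def using True Lt_nn by (intro nn_integral_eq_integral) auto
            have b_eq: "b = ennreal (\<integral>t. Lh t S \<partial>\<rho>)"
              unfolding b_def using Lh_int Lh_nn by (intro nn_integral_eq_integral) auto
            have "a' \<le> ennreal ((\<integral>t. Lt t \<partial>\<rho>) + K * \<Omega>)"
              using a'_le unfolding a_eq using K_nn \<Omega>_nn Lt_nn
              by (simp add: ennreal_plus[symmetric] ennreal_mult[symmetric] integral_nonneg_AE del: ennreal_plus)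
            then have a'r: "enn2real a' \<le> (\<integral>t. Lt t \<partial>\<rho>) + K * \<Omega>"
              using K_nn \<Omega>_nn Lt_nn by (intro enn2real_leI) (auto intro!: add_nonneg_nonneg integral_nonneg_AE)
            have br: "enn2real b = (\<integral>t. Lh t S \<partial>\<rho>)" unfolding b_eq using Lh_nn by (simp add: integral_nonneg_AE)
            have fi: "(\<integral>t. f t \<partial>\<rho>) = k * ((\<integral>t. Lt t \<partial>\<rho>) - (\<integral>t. Lh t S \<partial>\<rho>))"
              unfolding f_def using True Lh_int by simp
            have "enn2real a' - enn2real b \<le> ((\<integral>t. Lt t \<partial>\<rho>) - (\<integral>t. Lh t S \<partial>\<rho>)) + K * \<Omega>"
              using a'r br by simp
            also have "(\<integral>t. Lt t \<partial>\<rho>) - (\<integral>t. Lh t S \<partial>\<rho>) = (\<integral>t. f t \<partial>\<rho>) / k" using fi k by simp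
            also have "(\<integral>t. f t \<partial>\<rho>) / k \<le> (D + k\<^sup>2 * \<sigma>\<^sup>2 / (2 * real n) - ln \<epsilon>) / k"
              using f_bound k by (simp add: divide_right_mono)
            also have "(D + k\<^sup>2 * \<sigma>\<^sup>2 / (2 * real n) - ln \<epsilon>) / k = k * \<sigma>\<^sup>2 / (2 * real n) + (D - ln \<epsilon>) / k"
              using k by (simp add: field_simps power2_eq_square)
            finally show ?thesis unfolding rhs by simp
          next
            case False
            have a_inf: "a = \<infinity>"
            proof (rule ccontr)
              assume "a \<noteq> \<infinity>"
              then have "integrable \<rho> Lt" unfolding a_def using Lt_meas Lt_nn
                by (intro integrableI_nonneg) (auto simp: meq\<rho> less_top)
              with False show False by simp
            qed
            have a'_inf: "a' = \<infinity>" using a_le unfolding a_inf by (auto simp: top_unique ennreal_mult_eq_top_iff)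
            have b_inf: "b = \<infinity>"
            proof (rule ccontr)
              assume "b \<noteq> \<infinity>"
              then have Lh_int: "integrable \<rho> (\<lambda>t. Lh t S)" unfolding b_def using Lh_meas Lh_nn
                by (intro integrableI_nonneg) (auto simp: meq\<rho> less_top)
              have "Lt = (\<lambda>t. Lh t S + f t / k)" using k by (auto simp: f_def fun_eq_iff)
              then have "integrable \<rho> Lt" using Lh_int f_int by simp
              with False show False by simp
            qed
            have "0 \<le> k * \<sigma>\<^sup>2 / (2 * real n) + (D - ln \<epsilon>) / k + K * \<Omega>"
              using k D_nn lnneg K_nn \<Omega>_nn by (intro add_nonneg_nonneg) auto
            then show ?thesis unfolding rhs a'_inf b_inf by simp
          qed
        qed
        show ?thesis
          using main unfolding Let_def I1[unfolded PW_def, symmetric] I2[unfolded PW'_def PW_def, symmetric] \<rho>_def .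
      qed
    qed
  qed
  show ?thesis
    unfolding Let_def[of "P / \<sigma>0\<^sup>2"] \<gamma>_def[symmetric] using pen part2 unfolding \<Omega>_def C_def by simp
qed


end
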